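(* Let $\mathbf{F}$ be a finite field with $q$ elements, $n\ge1$, and $V_j=\operatorname{span}(b_1,\dots,b_j)\subseteq\mathbf{F}^n$ for the standard basis $b_1,\dots,b_n$. Let $T\colon V_{n-1}\to V_n$ be a semi-idempotent partial linear map with domain $V_{n-1}$ such that $\operatorname{im}T\not\subset V_{n-1}$, and let $r\ge0$. Then for every function $f\colon\mathbf{Z}_{\ge0}\to\mathbf{Z}$, \[ \sum_{\substack{S\colon V_n\to V_n\ \text{semi-idempotent}\\ \operatorname{rank} S\le r,\ S|_{V_{n-1}}=T}}\mu(\mathrm{srk}\,S)\,f(\operatorname{rank} S)=0. \]
   Context: A partial linear map on $V$ is a linear map $T\colon W\to V$ from a subspace $W$; composition of partial maps $T\circ S$ has domain $S^{-1}(\operatorname{dom}T)$; $T^0=\mathrm{id}$. A partial linear map $T$ is semi-idempotent if for some $N\ge0$, $T$ acts as the identity on $\operatorname{im}T^N$; for an operator $S\colon V\to V$ this is equivalent to $V=X\oplus Y$ with $S|_X=\mathrm{id}$, $S|_Y$ nilpotent, $X,Y$ $S$-stable. $\mathrm{srk}$ denotes the stable rank: $\dim\operatorname{im}T^j$ for $j\gg0$. $\mu(i)=(-1)^iq^{\binom i2}$. *)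

theory Defs
  imports Complex_Main "HOL-Library.Function_Algebras" "HOL-Library.Cardinality"
begin

text \<open>Vectors of F^n are functions nat => F vanishing at indices >= n; index i
  corresponds to the basis vector b_(i+1).  V j = span(b_1,...,b_j).\<close>

definition fscale :: "'a::field \<Rightarrow> (nat \<Rightarrow> 'a) \<Rightarrow> (nat \<Rightarrow> 'a)" where
  "fscale c v = (\<lambda>i. c * v i)"

lemma vector_space_fscale: "vector_space fscale"
  by unfold_locales (auto simp: fscale_def fun_eq_iff algebra_simps)

definition Vsp :: "nat \<Rightarrow> (nat \<Rightarrow> 'a::zero) set" where
  "Vsp j = {v. \<forall>i\<ge>j. v i = 0}"

definition vdim :: "(nat \<Rightarrow> 'a::field) set \<Rightarrow> nat" where
  "vdim W = vector_space.dim fscale W"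

type_synonym 'a pmap = "(nat \<Rightarrow> 'a) set \<times> ((nat \<Rightarrow> 'a) \<Rightarrow> (nat \<Rightarrow> 'a))"

definition pdom :: "'a pmap \<Rightarrow> (nat \<Rightarrow> 'a) set" where "pdom T = fst T"
definition papp :: "'a pmap \<Rightarrow> (nat \<Rightarrow> 'a) \<Rightarrow> (nat \<Rightarrow> 'a)" where "papp T = snd T"
definition pim :: "'a pmap \<Rightarrow> (nat \<Rightarrow> 'a) set" where "pim T = papp T ` pdom T"

definition pcomp :: "'a pmap \<Rightarrow> 'a pmap \<Rightarrow> 'a pmap" where
  "pcomp T S = ({x \<in> pdom S. papp S x \<in> pdom T}, papp T \<circ> papp S)"

primrec ppow :: "(nat \<Rightarrow> 'a) set \<Rightarrow> 'a pmap \<Rightarrow> nat \<Rightarrow> 'a pmap" where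
  "ppow V T 0 = (V, id)"
| "ppow V T (Suc k) = pcomp T (ppow V T k)"

definition semi_idempotent :: "(nat \<Rightarrow> 'a) set \<Rightarrow> 'a pmap \<Rightarrow> bool" where
  "semi_idempotent V T \<longleftrightarrow>
     (\<exists>N. \<forall>x \<in> pim (ppow V T N). x \<in> pdom T \<and> papp T x = x)"

definition prank :: "'a::field pmap \<Rightarrow> nat" where
  "prank T = vdim (pim T)"

definition srk :: "(nat \<Rightarrow> 'a::field) set \<Rightarrow> 'a pmap \<Rightarrow> nat" where
  "srk V T = (THE d. \<exists>J. \<forall>j\<ge>J. vdim (pim (ppow V T j)) = d)"

definition mu :: "int \<Rightarrow> nat \<Rightarrow> int" where
  "mu q i = (-1)^i * q ^ (i choose 2)"

definition mats :: "nat \<Rightarrow> (nat \<Rightarrow> nat \<Rightarrow> 'a::zero) set" where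
  "mats n = {A. \<forall>i j. (i \<ge> n \<or> j \<ge> n) \<longrightarrow> A i j = 0}"

definition matop :: "nat \<Rightarrow> (nat \<Rightarrow> nat \<Rightarrow> 'a::field) \<Rightarrow> 'a pmap" where
  "matop n A = (Vsp n, \<lambda>v i. if i < n then (\<Sum>j<n. A i j * v j) else 0)"

definition linear_on :: "(nat \<Rightarrow> 'a::field) set \<Rightarrow> ((nat \<Rightarrow> 'a) \<Rightarrow> (nat \<Rightarrow> 'a)) \<Rightarrow> bool" where
  "linear_on W f \<longleftrightarrow> (\<forall>x\<in>W. \<forall>y\<in>W. f (x + y) = f x + f y) \<and>
                      (\<forall>c. \<forall>x\<in>W. f (fscale c x) = fscale c (f x))"

end

theory Submission
  imports Defs "HOL-Computational_Algebra.Polynomial"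
begin

interpretation fs: vector_space fscale by (rule vector_space_fscale)

declare plus_fun_apply[simp del] zero_fun_apply[simp del] minus_apply[simp del] uminus_apply[simp del]

lemma fscale_add_right[simp]: "fscale a (x + y) = fscale a x + fscale a y"
  by (simp add: fscale_def fun_eq_iff plus_fun_apply zero_fun_apply minus_apply uminus_apply algebra_simps)
lemma fscale_add_left: "fscale (a + b) x = fscale a x + fscale b x"
  by (simp add: fscale_def fun_eq_iff plus_fun_apply zero_fun_apply minus_apply uminus_apply algebra_simps)
lemma fscale_diff_right[simp]: "fscale a (x - y) = fscale a x - fscale a y"
  by (simp add: fscale_def fun_eq_iff plus_fun_apply zero_fun_apply minus_apply uminus_apply algebra_simps)
lemma fscale_one[simp]: "fscale 1 x = x" by (simp add: fscale_def)
lemma fscale_zero_left[simp]: "fscale 0 x = 0" by (simp add: fscale_def fun_eq_iff plus_fun_apply zero_fun_apply minus_apply uminus_apply)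
lemma fscale_zero_right[simp]: "fscale a 0 = 0" by (simp add: fscale_def fun_eq_iff plus_fun_apply zero_fun_apply minus_apply uminus_apply)
lemma fscale_fscale[simp]: "fscale a (fscale b x) = fscale (a * b) x"
  by (simp add: fscale_def fun_eq_iff plus_fun_apply zero_fun_apply minus_apply uminus_apply)
lemma fscale_apply: "fscale a x i = a * x i" by (simp add: fscale_def)
lemmas pw = plus_fun_apply zero_fun_apply minus_apply uminus_apply fscale_apply
lemma fscale_minus_right: "fscale a (- x) = - fscale a x"
  by (simp add: fscale_def fun_eq_iff plus_fun_apply zero_fun_apply minus_apply uminus_apply)

lemma card_span_independent:
  fixes B :: "(nat \<Rightarrow> 'a::{finite,field}) set"
  assumes "finite B" "fs.independent B"
  shows "card (fs.span B) = CARD('a) ^ card B"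
  using assms
proof (induction B rule: finite_induct)
  case empty
  then show ?case by (simp add: fs.span_empty)
next
  case (insert x B)
  have ind: "fs.independent B" using insert.prems fs.independent_mono by blast
  have xn: "x \<notin> fs.span B" using insert.prems insert.hyps(2) fs.independent_insert by metis
  have eq: "fs.span (insert x B) = (\<lambda>(a, v). fscale a x + v) ` (UNIV \<times> fs.span B)"
  proof -
    have "fs.span (insert x B) = {z. \<exists>k. z - fscale k x \<in> fs.span B}" by (rule fs.span_insert)
    also have "\<dots> = (\<lambda>(a, v). fscale a x + v) ` (UNIV \<times> fs.span B)"
    proof (rule set_eqI, rule iffI)
      fix z assume "z \<in> {z. \<exists>k. z - fscale k x \<in> fs.span B}"
      then obtain k where "z - fscale k x \<in> fs.span B" by blast
      thus "z \<in> (\<lambda>(a, v). fscale a x + v) ` (UNIV \<times> fs.span B)"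
        by (intro image_eqI[of _ _ "(k, z - fscale k x)"]) auto
    next
      fix z assume "z \<in> (\<lambda>(a, v). fscale a x + v) ` (UNIV \<times> fs.span B)"
      then obtain a v where "v \<in> fs.span B" "z = fscale a x + v" by auto
      thus "z \<in> {z. \<exists>k. z - fscale k x \<in> fs.span B}"
        by (auto intro!: exI[of _ a])
    qed
    finally show ?thesis .
  qed
  have inj: "inj_on (\<lambda>(a, v). fscale a x + v) (UNIV \<times> fs.span B)"
  proof (rule inj_onI, clarify)
    fix a v a' v'
    assume v: "v \<in> fs.span B" and v': "v' \<in> fs.span B" and e: "fscale a x + v = fscale a' x + v'"
    have "fscale (a - a') x = v' - v"
      using e by (simp add: fscale_def fun_eq_iff plus_fun_apply zero_fun_apply minus_apply uminus_apply algebra_simps)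
    hence "fscale (a - a') x \<in> fs.span B" using v v' fs.span_diff by auto
    hence "a = a'"
    proof (rule contrapos_pp)
      assume "a \<noteq> a'"
      hence "fscale (inverse (a - a')) (fscale (a - a') x) = x" by simp
      thus "fscale (a - a') x \<notin> fs.span B" using xn fs.span_scale by metis
    qed
    thus "a = a' \<and> v = v'" using e by simp
  qed
  have "card (fs.span (insert x B)) = card ((UNIV :: 'a set) \<times> fs.span B)"
    unfolding eq using card_image[OF inj] by simp
  also have "\<dots> = CARD('a) * card (fs.span B)" by (simp add: card_cartesian_product)
  finally show ?case using insert ind by simp
qed

lemma card_subspace:
  fixes X :: "(nat \<Rightarrow> 'a::{finite,field}) set"
  assumes "fs.subspace X" "finite X"
  shows "card X = CARD('a) ^ vdim X"
proof -
  obtain B where B: "B \<subseteq> X" "fs.independent B" "X \<subseteq> fs.span B" "card B = fs.dim X"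
    using fs.basis_exists by blast
  have fB: "finite B" using B(1) assms(2) finite_subset by blast
  have "fs.span B = X" using B fs.span_minimal[OF B(1) assms(1)] by auto
  thus ?thesis using card_span_independent[OF fB B(2)] B(4) by (simp add: vdim_def)
qed

lemma dim_insert_finite:
  fixes S :: "(nat \<Rightarrow> 'a::field) set"
  assumes "finite S" "x \<notin> fs.span S"
  shows "fs.dim (insert x S) = fs.dim S + 1"
proof -
  obtain B where B: "B \<subseteq> fs.span S" "fs.independent B" "fs.span S \<subseteq> fs.span B" "card B = fs.dim (fs.span S)"
    using fs.basis_exists [of "fs.span S"] by blast
  have fB: "finite B" using fs.independent_span_bound[OF assms(1) B(2) B(1)] by simp
  have "fs.dim (fs.span (insert x S)) = Suc (fs.dim S)"
  proof (rule fs.dim_unique)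
    show "insert x B \<subseteq> fs.span (insert x S)"
      by (meson B(1) insertI1 insert_subset order_trans fs.span_base fs.span_mono subset_insertI)
    show "fs.span (insert x S) \<subseteq> fs.span (insert x B)"
      by (metis B(1) B(3) fs.span_breakdown_eq fs.span_subspace subsetI fs.subspace_span)
    show "fs.independent (insert x B)"
      by (metis B(1-3) fs.independent_insert fs.span_subspace fs.subspace_span assms(2))
    show "card (insert x B) = Suc (fs.dim S)"
      using B assms fB by (metis card_insert_disjoint fs.dim_span fs.span_base fs.span_subspace fs.subspace_span in_mono)
  qed
  then show ?thesis by (metis Suc_eq_plus1 fs.dim_span)
qed


definition lin :: "((nat \<Rightarrow> 'a::field) \<Rightarrow> (nat \<Rightarrow> 'a)) \<Rightarrow> bool" where
  "lin S \<longleftrightarrow> (\<forall>x y. S (x + y) = S x + S y) \<and> (\<forall>a x. S (fscale a x) = fscale a (S x))"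

lemma lin_add: "lin S \<Longrightarrow> S (x + y) = S x + S y" by (simp add: lin_def)
lemma lin_scale: "lin S \<Longrightarrow> S (fscale a x) = fscale a (S x)" by (simp add: lin_def)
lemma lin_zero: "lin S \<Longrightarrow> S 0 = 0"
  using lin_scale[of S 0 0] by simp
lemma fscale_m1: "fscale (-1) x = - x" by (simp add: fscale_def fun_eq_iff pw)
lemma lin_neg: "lin S \<Longrightarrow> S (- x) = - S x"
  using lin_scale[of S "-1" x] by (simp add: fscale_m1)
lemma lin_diff: "lin S \<Longrightarrow> S (x - y) = S x - S y"
  using lin_add[of S x "- y"] lin_neg[of S y] by simp
lemma lin_sum: "lin S \<Longrightarrow> S (\<Sum>i\<in>A. f i) = (\<Sum>i\<in>A. S (f i))"
  by (induction A rule: infinite_finite_induct) (auto simp: lin_zero lin_add)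
lemma lin_comp: "lin S \<Longrightarrow> lin R \<Longrightarrow> lin (S \<circ> R)"
  by (simp add: lin_def)
lemma lin_id: "lin id" by (simp add: lin_def)
lemma lin_funpow: "lin S \<Longrightarrow> lin (S ^^ k)"
  by (induction k) (auto simp: lin_id lin_comp)

lemma fscale_sum: "fscale a (\<Sum>i\<in>A. f i) = (\<Sum>i\<in>A. fscale a (f i))"
  by (induction A rule: infinite_finite_induct) auto

definition peval :: "'a::field poly \<Rightarrow> ((nat \<Rightarrow> 'a) \<Rightarrow> (nat \<Rightarrow> 'a)) \<Rightarrow> (nat \<Rightarrow> 'a) \<Rightarrow> (nat \<Rightarrow> 'a)" where
  "peval p S v = (\<Sum>i<Suc (degree p). fscale (coeff p i) ((S ^^ i) v))"

lemma peval_bound: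
  assumes "degree p < B"
  shows "peval p S v = (\<Sum>i<B. fscale (coeff p i) ((S ^^ i) v))"
proof -
  have sub: "{..<Suc (degree p)} \<subseteq> {..<B}" using assms by auto
  have "(\<Sum>i<B. fscale (coeff p i) ((S ^^ i) v)) = (\<Sum>i<Suc (degree p). fscale (coeff p i) ((S ^^ i) v))"
  proof (rule sum.mono_neutral_right[OF _ sub])
    show "finite {..<B}" by simp
    show "\<forall>i\<in>{..<B} - {..<Suc (degree p)}. fscale (coeff p i) ((S ^^ i) v) = 0"
    proof
      fix i assume "i \<in> {..<B} - {..<Suc (degree p)}"
      hence "degree p < i" by auto
      hence "coeff p i = 0" by (rule coeff_eq_0)
      thus "fscale (coeff p i) ((S ^^ i) v) = 0" by simp
    qed
  qed
  thus ?thesis by (simp add: peval_def)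
qed

lemma peval_add: "peval (p + q) S v = peval p S v + peval q S v"
proof -
  define B where "B = Suc (max (degree p) (degree q))"
  have "degree (p + q) < B" using degree_add_le_max[of p q] by (simp add: B_def le_imp_less_Suc)
  thus ?thesis
    by (simp add: peval_bound[of _ B] B_def fscale_add_left sum.distrib le_imp_less_Suc)
qed

lemma peval_smult: "peval (smult a p) S v = fscale a (peval p S v)"
proof -
  have "degree (smult a p) < Suc (degree p)" by (simp add: le_imp_less_Suc)
  hence "peval (smult a p) S v = (\<Sum>i<Suc (degree p). fscale (a * coeff p i) ((S ^^ i) v))"
    by (simp add: peval_bound)
  also have "\<dots> = fscale a (peval p S v)"
    unfolding peval_def by (simp add: fscale_sum)
  finally show ?thesis .
qed

lemma peval_const: "peval [:a:] S v = fscale a v"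
  by (simp add: peval_def)

lemma peval_pCons0:
  assumes "lin S"
  shows "peval (pCons 0 p) S v = S (peval p S v)"
proof -
  have d: "degree (pCons 0 p) < Suc (Suc (degree p))" by (simp add: le_imp_less_Suc)
  have "peval (pCons 0 p) S v = (\<Sum>i<Suc (Suc (degree p)). fscale (coeff (pCons 0 p) i) ((S ^^ i) v))"
    by (rule peval_bound[OF d])
  also have "\<dots> = (\<Sum>i<Suc (degree p). fscale (coeff p i) ((S ^^ Suc i) v))"
    by (subst sum.lessThan_Suc_shift) simp
  also have "\<dots> = S (peval p S v)"
    unfolding peval_def lin_sum[OF assms] lin_scale[OF assms] by simp
  finally show ?thesis .
qed

lemma peval_pCons:
  assumes "lin S"
  shows "peval (pCons a p) S v = fscale a v + S (peval p S v)"
proof -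
  have "pCons a p = [:a:] + pCons 0 p" by simp
  thus ?thesis by (metis peval_add peval_const peval_pCons0[OF assms])
qed

lemma peval_mult:
  assumes "lin S"
  shows "peval (p * q) S v = peval p S (peval q S v)"
proof (induction p)
  case (pCons a p)
  have "peval (pCons a p * q) S v = peval (smult a q) S v + peval (pCons 0 (p * q)) S v"
    by (simp add: peval_add)
  also have "\<dots> = fscale a (peval q S v) + S (peval p S (peval q S v))"
    by (simp add: peval_smult peval_pCons0[OF assms] pCons.IH)
  also have "\<dots> = peval (pCons a p) S (peval q S v)"
    by (simp add: peval_pCons[OF assms])
  finally show ?case .
qed (simp add: peval_def)

lemma peval_monom: "peval (monom a k) S v = fscale a ((S ^^ k) v)"
proof -
  have "degree (monom a k) < Suc k" by (simp add: degree_monom_le le_imp_less_Suc)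
  hence "peval (monom a k) S v = (\<Sum>i<Suc k. fscale (coeff (monom a k) i) ((S ^^ i) v))"
    by (rule peval_bound)
  also have "\<dots> = (\<Sum>i<Suc k. if i = k then fscale a ((S ^^ i) v) else 0)"
    by (intro sum.cong) (auto simp: coeff_monom)
  finally show ?thesis by simp
qed

lemma peval_diff: "peval (p - q) S v = peval p S v - peval q S v"
proof -
  have "peval p S v = peval (p - q) S v + peval q S v"
    using peval_add[of "p - q" q S v] by simp
  thus ?thesis by (simp add: eq_diff_eq)
qed

lemma peval_zero: "peval 0 S v = 0" by (simp add: peval_def)

lemma peval_sum: "peval (\<Sum>i\<in>A. f i) S v = (\<Sum>i\<in>A. peval (f i) S v)"
  by (induction A rule: infinite_finite_induct) (auto simp: peval_add peval_zero)

definition closed_sub :: "(nat \<Rightarrow> 'a::field) set \<Rightarrow> bool" where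
  "closed_sub D \<longleftrightarrow> 0 \<in> D \<and> (\<forall>x\<in>D. \<forall>y\<in>D. x + y \<in> D) \<and> (\<forall>a. \<forall>x\<in>D. fscale a x \<in> D)"

lemma closed_sub_0: "closed_sub D \<Longrightarrow> 0 \<in> D" by (simp add: closed_sub_def)
lemma closed_sub_add: "closed_sub D \<Longrightarrow> x \<in> D \<Longrightarrow> y \<in> D \<Longrightarrow> x + y \<in> D"
  by (simp add: closed_sub_def)
lemma closed_sub_scale: "closed_sub D \<Longrightarrow> x \<in> D \<Longrightarrow> fscale a x \<in> D"
  by (simp add: closed_sub_def)

lemma closed_sub_sum: "closed_sub D \<Longrightarrow> (\<And>i. i \<in> A \<Longrightarrow> f i \<in> D) \<Longrightarrow> (\<Sum>i\<in>A. f i) \<in> D"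
proof (induction A rule: infinite_finite_induct)
  case (insert x F)
  then show ?case by (simp add: closed_sub_add)
qed (simp_all add: closed_sub_0)

lemma closed_sub_diff: "closed_sub D \<Longrightarrow> x \<in> D \<Longrightarrow> y \<in> D \<Longrightarrow> x - y \<in> D"
proof -
  assume a: "closed_sub D" "x \<in> D" "y \<in> D"
  have e: "x - y = x + fscale (-1) y" by (simp add: fun_eq_iff pw)
  have "x + fscale (-1) y \<in> D" using a by (intro closed_sub_add closed_sub_scale)
  thus ?thesis unfolding e .
qed

lemma peval_closed:
  assumes "closed_sub D" "\<And>x. x \<in> D \<Longrightarrow> S x \<in> D" "d \<in> D"
  shows "peval p S d \<in> D"
proof -
  have "(S ^^ i) d \<in> D" for i by (induction i) (simp_all add: assms)
  thus ?thesis unfolding peval_def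
    by (intro closed_sub_sum[OF assms(1)] closed_sub_scale[OF assms(1)])
qed


lemma x_cancel:
  fixes p g :: "'a::field poly"
  assumes "\<not> [:0,1:] dvd p" "p dvd [:0,1:] * g"
  shows "p dvd g"
proof -
  obtain h where h: "[:0,1:] * g = p * h" using assms(2) by (auto elim: dvdE)
  have "poly p 0 \<noteq> 0" using assms(1) poly_eq_0_iff_dvd[of p 0] by simp
  moreover have "poly p 0 * poly h 0 = 0" using arg_cong[OF h, of "\<lambda>q. poly q 0"] by simp
  ultimately have "poly h 0 = 0" by simp
  then obtain h' where "h = [:0,1:] * h'" using poly_eq_0_iff_dvd[of h 0] by (auto elim: dvdE)
  with h have "[:0,1:] * g = [:0,1:] * (p * h')" by (simp add: ac_simps)
  hence "g = p * h'" by (metis mult_cancel_left pCons_eq_0_iff one_neq_zero)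
  thus ?thesis by simp
qed

lemma x_pow_cancel:
  fixes p g :: "'a::field poly"
  assumes "\<not> [:0,1:] dvd p" "p dvd [:0,1:] ^ K * g"
  shows "p dvd g"
  using assms(2)
proof (induction K)
  case (Suc K)
  then show ?case using x_cancel[OF assms(1), of "[:0,1:] ^ K * g"] by (simp add: ac_simps)
qed simp

lemma monic_dvd_classify:
  fixes p :: "'a::field poly"
  assumes "lead_coeff p = 1" "degree p = m" "1 \<le> m" "p dvd [:0,1:] ^ K * [:-1,1:]"
  shows "p = [:0,1:] ^ m \<or> p = [:0,1:] ^ (m - 1) * [:-1,1:]"
proof -
  have p0: "p \<noteq> 0" using assms(1) by auto
  obtain p' where d: "p = [:-0,1:] ^ order 0 p * p'" "\<not> [:-0,1:] dvd p'"
    using order_decomp[OF p0] by blast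
  define k where "k = order 0 p"
  have d1: "p = [:0,1:] ^ k * p'" and d2: "\<not> [:0,1:] dvd p'" using d by (simp_all add: k_def)
  have "p' dvd p" using d1 by simp
  hence "p' dvd [:0,1:] ^ K * [:-1,1:]" using assms(4) dvd_trans by blast
  hence pd: "p' dvd [:-1,1:]" using x_pow_cancel[OF d2] by blast
  have p'0: "p' \<noteq> 0" using d1 p0 by auto
  have lcp': "lead_coeff p' = 1"
    using assms(1) d1 by (simp add: lead_coeff_mult lead_coeff_power)
  have dg: "degree p = k + degree p'"
    using d1 p'0 by (simp add: degree_mult_eq degree_linear_power[of 0 k, simplified])
  have "degree p' \<le> 1" using dvd_imp_degree_le[OF pd] by simp
  then consider "degree p' = 0" | "degree p' = 1" by linarith
  thus ?thesis
  proof cases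
    case 1
    hence "p' = [:lead_coeff p':]" by (metis degree_0_id)
    hence "p' = 1" using lcp' by (simp add: one_pCons)
    thus ?thesis using d1 dg assms(2) 1 by simp
  next
    case 2
    obtain u where u: "[:-1,1:] = p' * u" using pd by (auto elim: dvdE)
    have u0: "u \<noteq> 0" using u by auto
    have "degree u = 0" using arg_cong[OF u, of degree] degree_mult_eq[OF p'0 u0] 2 by simp
    hence "u = [:lead_coeff u:]" by (metis degree_0_id)
    moreover have "lead_coeff u = 1"
      using arg_cong[OF u, of lead_coeff] lcp' by (simp add: lead_coeff_mult)
    ultimately have "u = 1" by (simp add: one_pCons)
    hence "p' = [:-1,1:]" using u by simp
    moreover have "k = m - 1" using dg assms(2) 2 by simp
    ultimately show ?thesis using d1 by simp
  qed
qed


lemma sum_apply_fun: "(\<Sum>i\<in>A. f i) x = (\<Sum>i\<in>A. f i x)"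
  by (induction A rule: infinite_finite_induct) (auto simp: pw)

lemma closed_sub_Vsp: "closed_sub (Vsp j :: (nat \<Rightarrow> 'a::field) set)"
  by (auto simp: closed_sub_def Vsp_def pw)

lemma closed_sub_subspace: "closed_sub D \<Longrightarrow> fs.subspace D"
  by (auto simp: closed_sub_def fs.subspace_def)

lemma finite_Vsp: "finite (Vsp n :: (nat \<Rightarrow> 'a::{finite,zero}) set)"
proof -
  have "Vsp n \<subseteq> (\<lambda>l i. if i < n then l ! i else 0) ` {l :: 'a list. length l = n}"
  proof
    fix v :: "nat \<Rightarrow> 'a" assume v: "v \<in> Vsp n"
    have "v = (\<lambda>i. if i < n then map v [0..<n] ! i else 0)"
      using v by (auto simp: Vsp_def fun_eq_iff)
    thus "v \<in> (\<lambda>l i. if i < n then l ! i else 0) ` {l. length l = n}"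
      by (intro image_eqI[of _ _ "map v [0..<n]"]) auto
  qed
  moreover have "finite {l :: 'a list. length l = n}"
    using finite_lists_length_eq[of "UNIV :: 'a set" n] by simp
  ultimately show ?thesis using finite_subset by blast
qed

locale psetup =
  fixes T :: "(nat \<Rightarrow> 'a::{finite,field}) \<Rightarrow> (nat \<Rightarrow> 'a)" and n :: nat
  assumes n1: "n \<ge> 1"
    and linT: "linear_on (Vsp (n - 1)) T"
    and TV: "\<forall>x \<in> Vsp (n - 1). T x \<in> Vsp n"
    and semi: "semi_idempotent (Vsp n) (Vsp (n - 1), T)"
    and notH: "\<not> (T ` Vsp (n - 1) \<subseteq> Vsp (n - 1))"
begin

abbreviation V :: "(nat \<Rightarrow> 'a) set" where "V \<equiv> Vsp n"
abbreviation H :: "(nat \<Rightarrow> 'a) set" where "H \<equiv> Vsp (n - 1)"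

definition trunc :: "(nat \<Rightarrow> 'a) \<Rightarrow> (nat \<Rightarrow> 'a)" where
  "trunc x = (\<lambda>i. if i < n - 1 then x i else 0)"
definition T' :: "(nat \<Rightarrow> 'a) \<Rightarrow> (nat \<Rightarrow> 'a)" where
  "T' x = T (trunc x)"
definition bvec :: "nat \<Rightarrow> 'a" where
  "bvec = (\<lambda>i. if i = n - 1 then 1 else 0)"

lemma H_sub_V: "H \<subseteq> V" using n1 by (auto simp: Vsp_def)
lemma inH_iff: "x \<in> V \<Longrightarrow> x \<in> H \<longleftrightarrow> x (n - 1) = 0"
proof -
  assume x: "x \<in> V"
  have "(\<forall>i\<ge>n - 1. x i = 0) \<longleftrightarrow> x (n - 1) = 0"
  proof
    assume "x (n - 1) = 0"
    thus "\<forall>i\<ge>n - 1. x i = 0" using x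
      by (metis (mono_tags, lifting) Vsp_def le_eq_less_or_eq mem_Collect_eq n1 Suc_le_eq Suc_diff_1 less_le_trans zero_less_one)
  qed simp
  thus ?thesis by (simp add: Vsp_def)
qed
lemma trunc_H: "trunc x \<in> H" by (simp add: trunc_def Vsp_def)
lemma trunc_id: "x \<in> H \<Longrightarrow> trunc x = x" by (auto simp: trunc_def Vsp_def fun_eq_iff)
lemma lin_trunc: "lin trunc" by (simp add: lin_def trunc_def fun_eq_iff pw)
lemma T_add: "x \<in> H \<Longrightarrow> y \<in> H \<Longrightarrow> T (x + y) = T x + T y"
  using linT by (simp add: linear_on_def)
lemma T_scale: "x \<in> H \<Longrightarrow> T (fscale a x) = fscale a (T x)"
  using linT by (simp add: linear_on_def)
lemma lin_T': "lin T'"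
  unfolding lin_def T'_def
  using lin_add[OF lin_trunc] lin_scale[OF lin_trunc] T_add T_scale trunc_H by simp
lemma T'_V: "T' x \<in> V" using TV trunc_H by (simp add: T'_def)
lemma T'_H: "x \<in> H \<Longrightarrow> T' x = T x" by (simp add: T'_def trunc_id)
lemma bvec_V: "bvec \<in> V" using n1 by (auto simp: bvec_def Vsp_def)
lemma bvec_notH: "bvec \<notin> H" by (auto simp: bvec_def Vsp_def)
lemma V_decomp: "x \<in> V \<Longrightarrow> x = trunc x + fscale (x (n - 1)) bvec"
proof -
  assume x: "x \<in> V"
  show ?thesis
  proof (rule ext)
    fix i
    consider "i < n - 1" | "i = n - 1" | "i > n - 1" by linarith
    thus "x i = (trunc x + fscale (x (n - 1)) bvec) i"
    proof cases
      case 3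
      hence "i \<ge> n" using n1 by linarith
      thus ?thesis using 3 x by (simp add: Vsp_def trunc_def bvec_def pw)
    qed (simp_all add: trunc_def bvec_def pw)
  qed
qed
lemma T'pow_V: "x \<in> V \<Longrightarrow> (T' ^^ k) x \<in> V"
  by (cases k) (auto simp: T'_V)
lemma lin_T'pow: "lin (T' ^^ k)" by (rule lin_funpow[OF lin_T'])

definition Dk :: "nat \<Rightarrow> (nat \<Rightarrow> 'a) set" where
  "Dk k = {x \<in> V. \<forall>i<k. (T' ^^ i) x \<in> H}"

lemma Dk_Suc': "x \<in> Dk (Suc k) \<longleftrightarrow> x \<in> Dk k \<and> (T' ^^ k) x \<in> H"
  by (auto simp: Dk_def less_Suc_eq)

lemma Dk_mono: "k \<le> k' \<Longrightarrow> Dk k' \<subseteq> Dk k"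
  by (auto simp: Dk_def)

lemma Dk_0: "Dk 0 = V" by (simp add: Dk_def)
lemma Dk_1: "Dk 1 = H" using H_sub_V by (auto simp: Dk_def)

lemma Dk_Suc: "x \<in> Dk (Suc k) \<longleftrightarrow> x \<in> H \<and> T' x \<in> Dk k"
proof
  assume x: "x \<in> Dk (Suc k)"
  hence "x \<in> H" by (auto simp: Dk_def)
  moreover have "T' x \<in> Dk k" unfolding Dk_def
  proof (intro CollectI conjI allI impI)
    show "T' x \<in> V" by (rule T'_V)
    fix i assume "i < k"
    have "(T' ^^ i) (T' x) = (T' ^^ Suc i) x" by (simp add: funpow_Suc_right del: funpow.simps)
    thus "(T' ^^ i) (T' x) \<in> H" using x \<open>i < k\<close> by (simp add: Dk_def del: funpow.simps)
  qed
  ultimately show "x \<in> H \<and> T' x \<in> Dk k" by blast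
next
  assume x: "x \<in> H \<and> T' x \<in> Dk k"
  show "x \<in> Dk (Suc k)" unfolding Dk_def
  proof (intro CollectI conjI allI impI)
    show "x \<in> V" using x H_sub_V by auto
    fix i assume "i < Suc k"
    thus "(T' ^^ i) x \<in> H"
    proof (cases i)
      case (Suc j)
      hence "(T' ^^ i) x = (T' ^^ j) (T' x)" by (simp add: funpow_Suc_right del: funpow.simps)
      thus ?thesis using x \<open>i < Suc k\<close> Suc by (auto simp: Dk_def)
    qed (use x in simp)
  qed
qed

lemma closed_Dk: "closed_sub (Dk k)"
  unfolding closed_sub_def Dk_def
  using closed_sub_Vsp[of n] closed_sub_Vsp[of "n - 1"]
  by (auto simp: closed_sub_def lin_zero[OF lin_T'pow] lin_add[OF lin_T'pow] lin_scale[OF lin_T'pow])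

lemma ppow_eq:
  "pdom (ppow V (H, T) k) = Dk k \<and> (\<forall>x\<in>Dk k. papp (ppow V (H, T) k) x = (T' ^^ k) x)"
proof (induction k)
  case 0
  then show ?case by (simp add: pdom_def papp_def Dk_0)
next
  case (Suc k)
  have dom: "pdom (ppow V (H, T) (Suc k)) = Dk (Suc k)"
    using Suc by (auto simp: pcomp_def pdom_def papp_def Dk_Suc')
  moreover have "\<forall>x\<in>Dk (Suc k). papp (ppow V (H, T) (Suc k)) x = (T' ^^ Suc k) x"
  proof
    fix x assume x: "x \<in> Dk (Suc k)"
    hence xk: "x \<in> Dk k" and h: "(T' ^^ k) x \<in> H" using Dk_Suc' by auto
    have "papp (ppow V (H, T) (Suc k)) x = T (papp (ppow V (H, T) k) x)"
      by (simp add: pcomp_def papp_def)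
    also have "\<dots> = T ((T' ^^ k) x)" using Suc xk by simp
    also have "\<dots> = T' ((T' ^^ k) x)" using T'_H[OF h] by simp
    finally show "papp (ppow V (H, T) (Suc k)) x = (T' ^^ Suc k) x" by simp
  qed
  ultimately show ?case by blast
qed

definition Nprop :: "nat \<Rightarrow> bool" where
  "Nprop N \<longleftrightarrow> (\<forall>x\<in>Dk N. (T' ^^ N) x \<in> H \<and> T' ((T' ^^ N) x) = (T' ^^ N) x)"

lemma Nprop_ex: "\<exists>N. Nprop N"
proof -
  obtain N where N: "\<forall>x \<in> pim (ppow V (H, T) N). x \<in> pdom (H, T) \<and> papp (H, T) x = x"
    using semi by (auto simp: semi_idempotent_def)
  have "Nprop N" unfolding Nprop_def
  proof
    fix x assume x: "x \<in> Dk N"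
    have "(T' ^^ N) x \<in> pim (ppow V (H, T) N)"
      using ppow_eq[of N] x unfolding pim_def by (metis image_eqI)
    hence "(T' ^^ N) x \<in> H \<and> T ((T' ^^ N) x) = (T' ^^ N) x"
      using N by (simp add: pdom_def papp_def)
    thus "(T' ^^ N) x \<in> H \<and> T' ((T' ^^ N) x) = (T' ^^ N) x" using T'_H by simp
  qed
  thus ?thesis by blast
qed

definition N :: nat where "N = Suc (SOME N. Nprop N)"

lemma N_prop: "Nprop N"
proof -
  have P: "Nprop (SOME N. Nprop N)" using someI_ex[OF Nprop_ex] .
  define N0 where "N0 = (SOME N. Nprop N)"
  show ?thesis unfolding Nprop_def N_def N0_def[symmetric]
  proof
    fix x assume x: "x \<in> Dk (Suc N0)"
    hence "x \<in> Dk N0" using Dk_mono[of N0 "Suc N0"] by auto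
    hence "(T' ^^ N0) x \<in> H \<and> T' ((T' ^^ N0) x) = (T' ^^ N0) x" using P by (simp add: Nprop_def N0_def)
    thus "(T' ^^ Suc N0) x \<in> H \<and> T' ((T' ^^ Suc N0) x) = (T' ^^ Suc N0) x" by simp
  qed
qed

lemma N_pos: "N \<ge> 1" by (simp add: N_def)

definition D :: "(nat \<Rightarrow> 'a) set" where "D = Dk N"

lemma D_stable: "x \<in> D \<Longrightarrow> (T' ^^ (N + i)) x = (T' ^^ N) x"
proof (induction i)
  case (Suc i)
  have "(T' ^^ (N + Suc i)) x = T' ((T' ^^ (N + i)) x)" by simp
  also have "\<dots> = (T' ^^ N) x" using Suc N_prop by (simp add: Nprop_def D_def)
  finally show ?case .
qed simp

lemma D_stable': "x \<in> D \<Longrightarrow> j \<ge> N \<Longrightarrow> (T' ^^ j) x = (T' ^^ N) x"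
  using D_stable[of x "j - N"] by simp

lemma D_all: "x \<in> D \<Longrightarrow> x \<in> Dk k"
proof -
  assume x: "x \<in> D"
  have "\<forall>i. (T' ^^ i) x \<in> H"
  proof
    fix i show "(T' ^^ i) x \<in> H"
    proof (cases "i < N")
      case True thus ?thesis using x by (auto simp: D_def Dk_def)
    next
      case False
      hence e: "(T' ^^ i) x = (T' ^^ N) x" by (intro D_stable'[OF x]) simp
      have "(T' ^^ N) x \<in> H" using N_prop x by (simp add: Nprop_def D_def)
      thus ?thesis using e by simp
    qed
  qed
  thus "x \<in> Dk k" using x by (simp add: Dk_def D_def)
qed

lemma Dk_ge: "k \<ge> N \<Longrightarrow> Dk k = D"
proof -
  assume k: "k \<ge> N"
  have "Dk k \<subseteq> D" unfolding D_def by (rule Dk_mono[OF k])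
  moreover have "D \<subseteq> Dk k" using D_all by blast
  ultimately show ?thesis by blast
qed

lemma D_H: "D \<subseteq> H" using D_all[where k=1] Dk_1 by blast
lemma D_V: "D \<subseteq> V" using D_H H_sub_V by blast
lemma closed_D: "closed_sub D" by (simp add: D_def closed_Dk)
lemma T'_D: "x \<in> D \<Longrightarrow> T' x \<in> D"
  using D_all[of x "Suc N"] Dk_Suc by (simp add: D_def)
lemma T'pow_D: "x \<in> D \<Longrightarrow> (T' ^^ k) x \<in> D"
  by (induction k) (auto simp: T'_D)

definition X :: "(nat \<Rightarrow> 'a) set" where "X = (T' ^^ N) ` D"
definition Y :: "(nat \<Rightarrow> 'a) set" where "Y = {d \<in> D. (T' ^^ N) d = 0}"

lemma X_D: "X \<subseteq> D" by (auto simp: X_def T'pow_D)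
lemma X_fix: "x \<in> X \<Longrightarrow> T' x = x"
  using N_prop by (auto simp: X_def Nprop_def D_def)
lemma X_fixpow: "x \<in> X \<Longrightarrow> (T' ^^ k) x = x"
  by (induction k) (auto simp: X_fix)
lemma X_H: "X \<subseteq> H" using X_D D_H by blast

lemma closed_X: "closed_sub X"
  unfolding closed_sub_def
proof (intro conjI ballI allI)
  show "0 \<in> X" unfolding X_def using closed_D lin_zero[OF lin_T'pow]
    by (metis closed_sub_def image_eqI)
next
  fix x y assume "x \<in> X" "y \<in> X"
  then obtain a b where "a \<in> D" "b \<in> D" "x = (T' ^^ N) a" "y = (T' ^^ N) b" by (auto simp: X_def)
  thus "x + y \<in> X" unfolding X_def using closed_D lin_add[OF lin_T'pow]
    by (metis closed_sub_def image_eqI)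
next
  fix c x assume "x \<in> X"
  then obtain a where "a \<in> D" "x = (T' ^^ N) a" by (auto simp: X_def)
  thus "fscale c x \<in> X" unfolding X_def using closed_D lin_scale[OF lin_T'pow]
    by (metis closed_sub_def image_eqI)
qed

lemma closed_Y: "closed_sub Y"
  using closed_D unfolding closed_sub_def Y_def
  by (auto simp: lin_zero[OF lin_T'pow] lin_add[OF lin_T'pow] lin_scale[OF lin_T'pow])

lemma XY_bij: "bij_betw (\<lambda>(x, y). x + y) (X \<times> Y) D"
proof (rule bij_betwI')
  fix p q assume p: "p \<in> X \<times> Y" and q: "q \<in> X \<times> Y"
  obtain x y x' y' where pq: "p = (x, y)" "q = (x', y')" by (cases p, cases q) auto
  show "((\<lambda>(x, y). x + y) p = (\<lambda>(x, y). x + y) q) = (p = q)"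
  proof
    assume e: "(\<lambda>(x, y). x + y) p = (\<lambda>(x, y). x + y) q"
    have xx: "x \<in> X" "x' \<in> X" "y \<in> Y" "y' \<in> Y" using p q pq by auto
    have "(T' ^^ N) (x + y) = x" using xx X_fixpow[of x N] lin_add[OF lin_T'pow] by (simp add: Y_def)
    moreover have "(T' ^^ N) (x' + y') = x'" using xx X_fixpow[of x' N] lin_add[OF lin_T'pow] by (simp add: Y_def)
    ultimately have "x = x'" using e pq by simp
    thus "p = q" using e pq by simp
  qed simp
next
  fix p assume "p \<in> X \<times> Y"
  thus "(\<lambda>(x, y). x + y) p \<in> D" using X_D closed_D by (auto simp: Y_def closed_sub_def)
next
  fix d assume d: "d \<in> D"
  define x where "x = (T' ^^ N) d"
  have x: "x \<in> X" using d by (simp add: X_def x_def)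
  have "(T' ^^ N) (d - x) = 0"
    using X_fixpow[OF x, of N] lin_diff[OF lin_T'pow] by (simp add: x_def)
  moreover have "d - x \<in> D" using closed_sub_diff[OF closed_D d] X_D x by auto
  ultimately have "d - x \<in> Y" by (simp add: Y_def)
  thus "\<exists>p\<in>X \<times> Y. d = (\<lambda>(x, y). x + y) p" using x by (intro bexI[of _ "(x, d - x)"]) auto
qed

end

context psetup
begin

definition m :: nat where "m = (LEAST k. Dk k = D)"

lemma Dk_m: "Dk m = D"
  unfolding m_def by (rule LeastI[of _ N]) (simp add: D_def)
lemma m_le_N: "m \<le> N"
  unfolding m_def by (rule Least_le) (simp add: D_def)
lemma Dk_ge_m: "k \<ge> m \<Longrightarrow> Dk k = D"
  using Dk_mono[of m k] Dk_m D_all by blast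

lemma D_ne_H: "D \<noteq> H"
proof
  assume DH: "D = H"
  have "T ` H \<subseteq> H"
  proof
    fix y assume "y \<in> T ` H"
    then obtain x where x: "x \<in> H" "y = T x" by blast
    have "T' x \<in> D" using T'_D x DH by simp
    thus "y \<in> H" using x T'_H DH by simp
  qed
  thus False using notH by simp
qed

lemma m_ge2: "m \<ge> 2"
proof (rule ccontr)
  assume "\<not> m \<ge> 2"
  hence "m = 0 \<or> m = 1" by linarith
  thus False
  proof
    assume "m = 0"
    hence "V = D" using Dk_m Dk_0 by simp
    thus False using bvec_V bvec_notH D_H by blast
  next
    assume "m = 1"
    hence "H = D" using Dk_m Dk_1 by simp
    thus False using D_ne_H by simp
  qed
qed

lemma Dk_m1_ne: "Dk (m - 1) \<noteq> D"
proof
  assume "Dk (m - 1) = D"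
  hence "m \<le> m - 1" unfolding m_def by (rule Least_le)
  thus False using m_ge2 by simp
qed

lemma e_ex: "\<exists>e. e \<in> Dk (m - 1) \<and> e \<notin> D"
  using Dk_m1_ne D_all by blast

definition e :: "nat \<Rightarrow> 'a" where "e = (SOME e. e \<in> Dk (m - 1) \<and> e \<notin> D)"

lemma e_prop: "e \<in> Dk (m - 1)" "e \<notin> D"
  using someI_ex[OF e_ex] by (simp_all add: e_def)

definition ee :: "nat \<Rightarrow> nat \<Rightarrow> 'a" where "ee i = (T' ^^ i) e"

lemma e_V: "e \<in> V" using e_prop by (simp add: Dk_def)
lemma ee_V: "ee i \<in> V" using e_V T'pow_V by (simp add: ee_def)
lemma ee_H: "i < m - 1 \<Longrightarrow> ee i \<in> H" using e_prop by (simp add: ee_def Dk_def)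
lemma ee_notH: "ee (m - 1) \<notin> H"
proof
  assume "ee (m - 1) \<in> H"
  hence "e \<in> Dk (Suc (m - 1))" using e_prop Dk_Suc' by (simp add: ee_def)
  hence "e \<in> D" using Dk_m m_ge2 by (simp add: Suc_diff_1)
  thus False using e_prop by simp
qed
lemma ee_notD: "ee (m - 1) \<notin> D" using ee_notH D_H by blast
lemma T'pow_ee: "(T' ^^ j) (ee i) = ee (j + i)" by (simp add: ee_def funpow_add)
lemma T'_ee: "T' (ee i) = ee (Suc i)" using T'pow_ee[of 1 i] by simp

definition c :: 'a where "c = ee (m - 1) (n - 1)"
lemma c_nz: "c \<noteq> 0" using ee_notH inH_iff[OF ee_V] by (simp add: c_def)

lemma ee_Dk: "i \<le> m - 1 \<Longrightarrow> ee i \<in> Dk (m - 1 - i)"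
  unfolding Dk_def
proof (intro CollectI conjI allI impI)
  show "ee i \<in> V" by (rule ee_V)
  fix j assume "i \<le> m - 1" "j < m - 1 - i"
  hence "j + i < m - 1" by simp
  thus "(T' ^^ j) (ee i) \<in> H" unfolding T'pow_ee by (rule ee_H)
qed

lemma decomp_aux:
  "j \<le> m \<Longrightarrow> v \<in> Dk (m - j) \<Longrightarrow> \<exists>d\<in>D. \<exists>a. v = d + (\<Sum>i<j. fscale (a i) (ee i))"
proof (induction j arbitrary: v)
  case 0
  then show ?case using Dk_m by (intro bexI[of _ v]) auto
next
  case (Suc j)
  define k where "k = m - Suc j"
  have v: "v \<in> Dk k" using Suc.prems by (simp add: k_def)
  define t where "t = (T' ^^ k) v (n - 1) / c"
  define v' where "v' = v - fscale t (ee j)"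
  have ej: "ee j \<in> Dk k" using ee_Dk[of j] Suc.prems by (simp add: k_def)
  have v'k: "v' \<in> Dk k" unfolding v'_def
    by (intro closed_sub_diff[OF closed_Dk v] closed_sub_scale[OF closed_Dk ej])
  have kj: "k + j = m - 1" using Suc.prems by (simp add: k_def)
  have Tv': "(T' ^^ k) v' = (T' ^^ k) v - fscale t (ee (m - 1))"
    unfolding v'_def using lin_diff[OF lin_T'pow] lin_scale[OF lin_T'pow] T'pow_ee kj by simp
  have "(T' ^^ k) v' \<in> V" using v'k T'pow_V by (simp add: Dk_def)
  moreover have "(T' ^^ k) v' (n - 1) = 0"
  proof -
    have "(T' ^^ k) v' (n - 1) = (T' ^^ k) v (n - 1) - t * c" unfolding Tv' c_def by (simp add: pw)
    also have "\<dots> = 0" using c_nz by (simp add: t_def)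
    finally show ?thesis .
  qed
  ultimately have "(T' ^^ k) v' \<in> H" using inH_iff by blast
  hence "v' \<in> Dk (Suc k)" using v'k Dk_Suc' by blast
  moreover have "Suc k = m - j" using Suc.prems by (simp add: k_def)
  ultimately have "v' \<in> Dk (m - j)" by simp
  then obtain d a where d: "d \<in> D" "v' = d + (\<Sum>i<j. fscale (a i) (ee i))"
    using Suc.IH Suc.prems by fastforce
  define a' where "a' = a(j := t)"
  have "(\<Sum>i<Suc j. fscale (a' i) (ee i)) = (\<Sum>i<j. fscale (a i) (ee i)) + fscale t (ee j)"
    by (simp add: a'_def)
  hence "v = d + (\<Sum>i<Suc j. fscale (a' i) (ee i))"
    using d by (simp add: v'_def algebra_simps)
  thus ?case using d by blast
qed

lemma decomp: "v \<in> V \<Longrightarrow> \<exists>d\<in>D. \<exists>a. v = d + (\<Sum>i<m. fscale (a i) (ee i))"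
  using decomp_aux[of m v] Dk_0 by simp

lemma uniq:
  assumes "(\<Sum>i<m. fscale (a i) (ee i)) \<in> D"
  shows "\<forall>i<m. a i = 0"
proof (rule ccontr)
  assume "\<not> (\<forall>i<m. a i = 0)"
  hence ne: "{i. i < m \<and> a i \<noteq> 0} \<noteq> {}" by auto
  define j where "j = Max {i. i < m \<and> a i \<noteq> 0}"
  have fin: "finite {i. i < m \<and> a i \<noteq> 0}" by simp
  have j: "j < m" "a j \<noteq> 0" using Max_in[OF fin ne] by (auto simp: j_def)
  have big: "i < m \<Longrightarrow> j < i \<Longrightarrow> a i = 0" for i
  proof (rule ccontr)
    assume "i < m" "j < i" "a i \<noteq> 0"
    hence "i \<le> j" unfolding j_def by (intro Max_ge[OF fin]) simp
    thus False using \<open>j < i\<close> by simp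
  qed
  define s where "s = (\<Sum>i<m. fscale (a i) (ee i))"
  define k where "k = m - 1 - j"
  have "s \<in> Dk (Suc k)" using assms D_all by (simp add: s_def)
  hence sH: "(T' ^^ k) s \<in> H" using Dk_Suc' by blast
  have Ts: "(T' ^^ k) s = (\<Sum>i<m. fscale (a i) (ee (k + i)))"
    unfolding s_def by (simp add: lin_sum[OF lin_T'pow] lin_scale[OF lin_T'pow] T'pow_ee)
  have "(T' ^^ k) s (n - 1) = 0"
    using sH by (simp add: Vsp_def)
  hence "(\<Sum>i<m. a i * ee (k + i) (n - 1)) = 0" by (simp add: Ts sum_apply_fun pw)
  moreover have "(\<Sum>i<m. a i * ee (k + i) (n - 1)) = a j * ee (k + j) (n - 1)"
  proof -
    have "(\<Sum>i<m. a i * ee (k + i) (n - 1)) = a j * ee (k + j) (n - 1) + (\<Sum>i\<in>{..<m} - {j}. a i * ee (k + i) (n - 1))"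
      using j by (simp add: sum.remove)
    moreover have "(\<Sum>i\<in>{..<m} - {j}. a i * ee (k + i) (n - 1)) = 0"
    proof (rule sum.neutral, rule ballI)
      fix i assume i: "i \<in> {..<m} - {j}"
      show "a i * ee (k + i) (n - 1) = 0"
      proof (cases "i < j")
        case True
        hence "k + i < m - 1" using j by (simp add: k_def)
        hence "ee (k + i) (n - 1) = 0" using ee_H inH_iff ee_V by blast
        thus ?thesis by simp
      next
        case False
        hence "a i = 0" using i big by auto
        thus ?thesis by simp
      qed
    qed
    ultimately show ?thesis by simp
  qed
  moreover have "k + j = m - 1" using j by (simp add: k_def)
  ultimately have "a j * c = 0" by (simp add: c_def)
  thus False using j c_nz by simp
qed

lemma lin_ext_in:
  assumes "lin R" "closed_sub W" "\<And>d. d \<in> D \<Longrightarrow> R d \<in> W" "\<And>i. i < m \<Longrightarrow> R (ee i) \<in> W" "v \<in> V"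
  shows "R v \<in> W"
proof -
  obtain d a where d: "d \<in> D" "v = d + (\<Sum>i<m. fscale (a i) (ee i))" using decomp[OF assms(5)] by blast
  have "R v = R d + (\<Sum>i<m. fscale (a i) (R (ee i)))"
    using d by (simp add: lin_add[OF assms(1)] lin_sum[OF assms(1)] lin_scale[OF assms(1)])
  moreover have "(\<Sum>i<m. fscale (a i) (R (ee i))) \<in> W"
    by (intro closed_sub_sum[OF assms(2)] closed_sub_scale[OF assms(2)] assms(4)) simp
  ultimately show ?thesis using assms d closed_sub_add by metis
qed

lemma lin_ext_eq:
  assumes "lin R" "lin R'" "\<And>d. d \<in> D \<Longrightarrow> R d = R' d" "\<And>i. i < m \<Longrightarrow> R (ee i) = R' (ee i)" "v \<in> V"
  shows "R v = R' v"
proof -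
  obtain d a where d: "d \<in> D" "v = d + (\<Sum>i<m. fscale (a i) (ee i))" using decomp[OF assms(5)] by blast
  have "R v = R d + (\<Sum>i<m. fscale (a i) (R (ee i)))"
    using d by (simp add: lin_add[OF assms(1)] lin_sum[OF assms(1)] lin_scale[OF assms(1)])
  moreover have "R' v = R' d + (\<Sum>i<m. fscale (a i) (R' (ee i)))"
    using d by (simp add: lin_add[OF assms(2)] lin_sum[OF assms(2)] lin_scale[OF assms(2)])
  ultimately show ?thesis using assms d by simp
qed

end

lemma xpow_xm1: "[:0,1:] ^ k * [:-1,1:] = monom (1::'a::field) (Suc k) - monom 1 k"
proof -
  have "[:-1,1:] = [:0,1::'a:] - 1" by (simp add: one_pCons)
  hence "[:0,1:] ^ k * [:-1,1:] = [:0,1::'a:] ^ Suc k - [:0,1:] ^ k" by (simp add: algebra_simps)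
  thus ?thesis by (simp add: monom_altdef)
qed

lemma funpow_stab:
  fixes R :: "'b \<Rightarrow> 'b"
  assumes "\<forall>v\<in>A. (R ^^ Suc K) v = (R ^^ K) v" "K \<le> K'" "v \<in> A"
  shows "(R ^^ Suc K') v = (R ^^ K') v"
proof -
  obtain j where j: "K' = j + K" using assms(2) le_Suc_ex by (metis add.commute)
  have "(R ^^ Suc K') v = (R ^^ j) ((R ^^ Suc K) v)"
    by (simp only: j add_Suc_right[symmetric] funpow_add comp_apply)
  also have "\<dots> = (R ^^ j) ((R ^^ K) v)" using assms by simp
  also have "\<dots> = (R ^^ K') v" by (simp add: j funpow_add)
  finally show ?thesis .
qed

lemma the_srk:
  fixes g :: "nat \<Rightarrow> nat"
  assumes "\<forall>j\<ge>J0. g j = (s0::nat)"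
  shows "(THE d. \<exists>J. \<forall>j\<ge>J. g j = d) = s0"
proof (rule the_equality)
  show "\<exists>J. \<forall>j\<ge>J. g j = s0" using assms by blast
next
  fix d assume "\<exists>J. \<forall>j\<ge>J. g j = d"
  then obtain J where J: "\<forall>j\<ge>J. g j = d" by blast
  have "g (max J J0) = d" by (rule J[rule_format]) simp
  moreover have "g (max J J0) = s0" using assms by simp
  ultimately show "d = s0" by simp
qed

context psetup
begin

definition w :: "(nat \<Rightarrow> 'a) \<Rightarrow> (nat \<Rightarrow> 'a)" where
  "w y = fscale (inverse c) (y - T' (ee (m - 1)))"
definition Sop :: "(nat \<Rightarrow> 'a) \<Rightarrow> (nat \<Rightarrow> 'a) \<Rightarrow> (nat \<Rightarrow> 'a)" where
  "Sop y v = T' v + fscale (v (n - 1)) (w y)"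

lemma lin_Sop: "lin (Sop y)"
  unfolding lin_def Sop_def
  by (simp add: lin_add[OF lin_T'] lin_scale[OF lin_T'] pw fscale_add_left algebra_simps)

lemma lin_Soppow: "lin (Sop y ^^ k)" by (rule lin_funpow[OF lin_Sop])

lemma w_V: "y \<in> V \<Longrightarrow> w y \<in> V"
  unfolding w_def using closed_sub_Vsp T'_V
  by (intro closed_sub_scale closed_sub_diff) auto

lemma Sop_V: "y \<in> V \<Longrightarrow> Sop y v \<in> V"
  unfolding Sop_def using closed_sub_Vsp T'_V w_V
  by (intro closed_sub_add closed_sub_scale) auto

lemma Soppow_V: "y \<in> V \<Longrightarrow> v \<in> V \<Longrightarrow> (Sop y ^^ k) v \<in> V"
  by (cases k) (auto simp: Sop_V)

lemma H_last: "x \<in> H \<Longrightarrow> x (n - 1) = 0" by (simp add: Vsp_def)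

lemma Sop_H: "x \<in> H \<Longrightarrow> Sop y x = T' x"
proof -
  assume "x \<in> H"
  hence "x (n - 1) = 0" by (rule H_last)
  thus ?thesis by (simp add: Sop_def)
qed

lemma c_eq: "ee (m - Suc 0) (n - Suc 0) = c" by (simp add: c_def)

lemma Sop_last: "Sop y (ee (m - 1)) = y"
  unfolding Sop_def w_def using c_nz
  by (simp add: c_eq fun_eq_iff pw algebra_simps)

lemma Soppow_D: "d \<in> D \<Longrightarrow> (Sop y ^^ k) d = (T' ^^ k) d"
proof (induction k)
  case (Suc k)
  have "(T' ^^ k) d \<in> H" using T'pow_D[OF Suc.prems] D_H by blast
  thus ?case using Suc by (simp add: Sop_H)
qed simp

lemma Sop_D: "d \<in> D \<Longrightarrow> Sop y d \<in> D"
  using Sop_H D_H T'_D by auto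

lemma Soppow_e: "i \<le> m - 1 \<Longrightarrow> (Sop y ^^ i) e = ee i"
proof (induction i)
  case 0 then show ?case by (simp add: ee_def)
next
  case (Suc i)
  hence "ee i \<in> H" using ee_H by simp
  thus ?case using Suc by (simp add: Sop_H T'_ee)
qed

lemma Soppow_m: "(Sop y ^^ m) e = y"
proof -
  have "m = Suc (m - 1)" using m_ge2 by simp
  hence "(Sop y ^^ m) e = Sop y ((Sop y ^^ (m - 1)) e)" by (metis funpow.simps(2) comp_apply)
  thus ?thesis using Soppow_e[of "m - 1"] Sop_last by simp
qed

lemma Soppow_ge_m: "j \<ge> m \<Longrightarrow> (Sop y ^^ j) e = (Sop y ^^ (j - m)) y"
proof -
  assume "j \<ge> m"
  hence "j = (j - m) + m" by simp
  hence "(Sop y ^^ j) e = (Sop y ^^ (j - m)) ((Sop y ^^ m) e)" by (metis funpow_add comp_apply)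
  thus ?thesis by (simp add: Soppow_m)
qed

lemma Soppow_ee: "i < m \<Longrightarrow> (Sop y ^^ K) (ee i) = (Sop y ^^ (K + i)) e"
  using Soppow_e[of i y] by (simp add: funpow_add)

definition si :: "((nat \<Rightarrow> 'a) \<Rightarrow> (nat \<Rightarrow> 'a)) \<Rightarrow> bool" where
  "si R \<longleftrightarrow> (\<exists>K. \<forall>v\<in>V. (R ^^ Suc K) v = (R ^^ K) v)"

definition good :: "(nat \<Rightarrow> 'a) \<Rightarrow> bool" where
  "good y \<longleftrightarrow> y \<in> D \<or> y - ee (m - 1) \<in> Y"

lemma caseA_pow:
  assumes y: "y \<in> D" and j: "j \<ge> N + m" and i: "i < m"
  shows "(Sop y ^^ j) (ee i) = (T' ^^ N) y"
proof -
  have "(Sop y ^^ j) (ee i) = (Sop y ^^ (j + i - m)) y"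
    using Soppow_ee[OF i] Soppow_ge_m[of "j + i"] j by simp
  also have "\<dots> = (T' ^^ (j + i - m)) y" by (rule Soppow_D[OF y])
  also have "\<dots> = (T' ^^ N) y" using j by (intro D_stable'[OF y]) simp
  finally show ?thesis .
qed

lemma caseB_step:
  assumes d: "y - ee (m - 1) \<in> Y" and t: "t \<ge> N"
  shows "(Sop y ^^ Suc (m - 1 + t)) e = (Sop y ^^ (m - 1 + t)) e"
proof -
  have mm: "Suc (m - 1 + t) = t + m" using m_ge2 by simp
  have a: "(Sop y ^^ Suc (m - 1 + t)) e = (Sop y ^^ t) y"
    unfolding mm using Soppow_m by (simp add: funpow_add)
  have b: "(Sop y ^^ (m - 1 + t)) e = (Sop y ^^ t) (ee (m - 1))"
    using Soppow_e[of "m - 1" y] by (simp add: funpow_add add.commute)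
  have dD: "y - ee (m - 1) \<in> D" and d0: "(T' ^^ N) (y - ee (m - 1)) = 0" using d by (auto simp: Y_def)
  have "(Sop y ^^ t) y - (Sop y ^^ t) (ee (m - 1)) = (Sop y ^^ t) (y - ee (m - 1))"
    by (simp add: lin_diff[OF lin_Soppow])
  also have "\<dots> = (T' ^^ t) (y - ee (m - 1))" by (rule Soppow_D[OF dD])
  also have "\<dots> = 0" using D_stable'[OF dD t] d0 by simp
  finally show ?thesis using a b by simp
qed

lemma caseB_const:
  assumes d: "y - ee (m - 1) \<in> Y" and j: "j \<ge> N + m - 1"
  shows "(Sop y ^^ j) e = (Sop y ^^ (N + m - 1)) e"
  using j
proof (induction j rule: dec_induct)
  case (step j)
  have "j = m - 1 + (j - (m - 1))" "j - (m - 1) \<ge> N" using step m_ge2 by auto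
  hence "(Sop y ^^ Suc j) e = (Sop y ^^ j) e" using caseB_step[OF d, of "j - (m - 1)"] by metis
  thus ?case using step by simp
qed simp

lemma good_si:
  assumes y: "y \<in> V" and g: "good y"
  shows "si (Sop y)"
proof -
  define K where "K = N + m"
  have "\<forall>v\<in>V. (Sop y ^^ Suc K) v = (Sop y ^^ K) v"
  proof
    fix v assume v: "v \<in> V"
    show "(Sop y ^^ Suc K) v = (Sop y ^^ K) v"
    proof (rule lin_ext_eq[OF lin_Soppow lin_Soppow _ _ v])
      fix d assume d: "d \<in> D"
      have "(Sop y ^^ Suc K) d = (T' ^^ Suc K) d" by (rule Soppow_D[OF d])
      also have "\<dots> = (T' ^^ N) d" by (rule D_stable'[OF d]) (simp add: K_def)
      also have "\<dots> = (T' ^^ K) d" by (rule D_stable'[OF d, symmetric]) (simp add: K_def)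
      also have "\<dots> = (Sop y ^^ K) d" by (rule Soppow_D[OF d, symmetric])
      finally show "(Sop y ^^ Suc K) d = (Sop y ^^ K) d" .
    next
      fix i assume i: "i < m"
      show "(Sop y ^^ Suc K) (ee i) = (Sop y ^^ K) (ee i)"
      proof (cases "y \<in> D")
        case True
        show ?thesis using caseA_pow[OF True _ i, of K] caseA_pow[OF True _ i, of "Suc K"] by (simp add: K_def)
      next
        case False
        hence d: "y - ee (m - 1) \<in> Y" using g by (simp add: good_def)
        show ?thesis unfolding Soppow_ee[OF i]
          using caseB_const[OF d, of "Suc K + i"] caseB_const[OF d, of "K + i"] by (simp add: K_def)
      qed
    qed
  qed
  thus ?thesis by (auto simp: si_def)
qed

end

context psetup
begin

lemma si_good:
  assumes y: "y \<in> V" and si: "si (Sop y)"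
  shows "good y"
proof -
  obtain K0 where K0: "\<forall>v\<in>V. (Sop y ^^ Suc K0) v = (Sop y ^^ K0) v" using si by (auto simp: si_def)
  define K where "K = K0 + N"
  have stab: "K' \<ge> K0 \<Longrightarrow> v \<in> V \<Longrightarrow> (Sop y ^^ Suc K') v = (Sop y ^^ K') v" for K' v
    using funpow_stab[OF K0] by blast
  obtain d a where d: "d \<in> D" "y = d + (\<Sum>i<m. fscale (a i) (ee i))" using decomp[OF y] by blast
  define p where "p = monom 1 m - (\<Sum>i<m. monom (a i) i)"
  have coeff_p: "coeff p k = (if k = m then 1 else 0) - (if k < m then a k else 0)" for k
    by (simp add: p_def coeff_sum coeff_monom)
  have deg_p: "degree p = m"
  proof (rule antisym)
    show "degree p \<le> m" by (rule degree_le) (simp add: coeff_p)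
    show "m \<le> degree p" by (rule le_degree) (simp add: coeff_p)
  qed
  have lc_p: "lead_coeff p = 1" using deg_p coeff_p by simp
  have p0: "p \<noteq> 0" using lc_p by auto
  have ee_pow: "i < m \<Longrightarrow> (Sop y ^^ i) e = ee i" for i using Soppow_e by simp
  have pe: "peval p (Sop y) e = d"
  proof -
    have "peval p (Sop y) e = (Sop y ^^ m) e - (\<Sum>i<m. fscale (a i) ((Sop y ^^ i) e))"
      by (simp add: p_def peval_diff peval_sum peval_monom)
    also have "\<dots> = y - (\<Sum>i<m. fscale (a i) (ee i))"
      by (simp add: Soppow_m ee_pow)
    also have "\<dots> = d" using d by simp
    finally show ?thesis .
  qed
  define g :: "'a poly" where "g = [:0,1:] ^ K * [:-1,1:]"
  have pg: "peval g (Sop y) e = 0"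
    unfolding g_def xpow_xm1 using stab[of K e] e_V
    by (simp add: peval_diff peval_monom K_def del: funpow.simps)
  define r where "r = g mod p"
  have gdec: "g = g div p * p + r" by (simp add: r_def)
  have "peval g (Sop y) e = peval (g div p) (Sop y) d + peval r (Sop y) e"
    using gdec pe by (metis peval_add peval_mult[OF lin_Sop])
  hence "peval (g div p) (Sop y) d + peval r (Sop y) e = 0" using pg by simp
  hence "- peval (g div p) (Sop y) d = peval r (Sop y) e" by (simp only: neg_eq_iff_add_eq_0)
  hence per_eq: "peval r (Sop y) e = 0 - peval (g div p) (Sop y) d" by simp
  have per: "peval r (Sop y) e \<in> D"
    unfolding per_eq
    by (intro closed_sub_diff[OF closed_D] closed_sub_0[OF closed_D] peval_closed[OF closed_D Sop_D d(1)])
  have deg_r: "degree r < m"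
    using degree_mod_less[OF p0, of g] deg_p m_ge2 by (auto simp: r_def)
  have "peval r (Sop y) e = (\<Sum>i<m. fscale (coeff r i) (ee i))"
    using peval_bound[OF deg_r] by (simp add: ee_pow)
  hence "\<forall>i<m. coeff r i = 0" using uniq per by simp
  hence "r = 0"
    by (intro poly_eqI) (metis coeff_0 coeff_eq_0 deg_r not_le order.strict_trans1)
  hence "p dvd g" by (simp add: r_def dvd_eq_mod_eq_0)
  hence cls: "p = [:0,1:] ^ m \<or> p = [:0,1:] ^ (m - 1) * [:-1,1:]"
    using monic_dvd_classify[OF lc_p deg_p] m_ge2 unfolding g_def by simp
  thus ?thesis
  proof
    assume "p = [:0,1:] ^ m"
    hence "coeff p i = coeff (monom 1 m) i" for i by (simp add: monom_altdef)
    hence "i < m \<Longrightarrow> a i = 0" for i using coeff_p[of i] by (simp add: coeff_monom)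
    hence "y = d" using d by simp
    thus ?thesis using d by (simp add: good_def)
  next
    assume "p = [:0,1:] ^ (m - 1) * [:-1,1:]"
    hence "p = monom 1 m - monom 1 (m - 1)" using xpow_xm1[of "m - 1"] m_ge2 by simp
    hence "coeff p i = (if i = m then 1 else 0) - (if i = m - 1 then 1 else 0)" for i
      by (simp add: coeff_monom)
    hence ai: "i < m \<Longrightarrow> a i = (if i = m - 1 then 1 else 0)" for i using coeff_p[of i] by auto
    have "(\<Sum>i<m. fscale (a i) (ee i)) = (\<Sum>i<m. if i = m - 1 then ee i else 0)"
      by (intro sum.cong) (auto simp: ai)
    also have "\<dots> = ee (m - 1)" using m_ge2 by simp
    finally have yd: "y - ee (m - 1) = d" using d by simp
    have "(T' ^^ N) d = (T' ^^ K) d" by (rule D_stable'[OF d(1), symmetric]) (simp add: K_def)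
    also have "\<dots> = (Sop y ^^ K) d" by (rule Soppow_D[OF d(1), symmetric])
    also have "\<dots> = (Sop y ^^ K) y - (Sop y ^^ K) (ee (m - 1))"
      by (simp add: yd[symmetric] lin_diff[OF lin_Soppow])
    also have "(Sop y ^^ K) y = (Sop y ^^ (K + m)) e"
      using Soppow_ge_m[where j="K + m" and y=y] by simp
    also have "(Sop y ^^ K) (ee (m - 1)) = (Sop y ^^ (K + (m - 1))) e"
      using Soppow_ee[where i="m - 1" and y=y and K=K] m_ge2 by simp
    also have "(Sop y ^^ (K + m)) e = (Sop y ^^ (K + (m - 1))) e"
      using stab[of "K + (m - 1)" e] e_V m_ge2 by (simp add: K_def)
    finally have "(T' ^^ N) d = 0" by simp
    thus ?thesis using yd d by (simp add: good_def Y_def)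
  qed
qed

end

lemma subspace_closed: "fs.subspace W \<Longrightarrow> closed_sub W"
  by (auto simp: closed_sub_def fs.subspace_def)

context psetup
begin

definition s :: nat where "s = vdim X"

lemma X_V: "X \<subseteq> V" using X_D D_V by (rule order.trans)
lemma finite_X: "finite X" by (rule finite_subset[OF X_V finite_Vsp])
lemma subspace_X: "fs.subspace X" by (rule closed_sub_subspace[OF closed_X])
lemma span_X: "fs.span X = X" by (rule fs.span_eq_iff[THEN iffD2, OF subspace_X])

lemma img_A:
  assumes y: "y \<in> D" and j: "j \<ge> N + m"
  shows "(Sop y ^^ j) ` V = X"
proof
  show "(Sop y ^^ j) ` V \<subseteq> X"
  proof
    fix u assume "u \<in> (Sop y ^^ j) ` V"
    then obtain v where v: "v \<in> V" "u = (Sop y ^^ j) v" by blast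
    have "(Sop y ^^ j) v \<in> X"
    proof (rule lin_ext_in[OF lin_Soppow closed_X _ _ v(1)])
      fix d assume d: "d \<in> D"
      have "(Sop y ^^ j) d = (T' ^^ N) d" using Soppow_D[OF d, where y=y and k=j] D_stable'[OF d, of j] j by simp
      thus "(Sop y ^^ j) d \<in> X" using d by (simp add: X_def)
    next
      fix i assume i: "i < m"
      show "(Sop y ^^ j) (ee i) \<in> X" using caseA_pow[OF y j i] y by (simp add: X_def)
    qed
    thus "u \<in> X" using v by simp
  qed
next
  show "X \<subseteq> (Sop y ^^ j) ` V"
  proof
    fix x assume x: "x \<in> X"
    have "(Sop y ^^ j) x = x" using Soppow_D[where d=x and y=y and k=j] X_D x X_fixpow by auto
    thus "x \<in> (Sop y ^^ j) ` V" using x X_V by (metis image_eqI subsetD)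
  qed
qed

lemma srk_A:
  assumes y: "y \<in> D"
  shows "(THE d. \<exists>J. \<forall>j\<ge>J. vdim ((Sop y ^^ j) ` V) = d) = s"
  by (rule the_srk[of "N + m"]) (simp add: img_A[OF y] s_def)

definition z :: "(nat \<Rightarrow> 'a) \<Rightarrow> (nat \<Rightarrow> 'a)" where "z y = (Sop y ^^ (N + m - 1)) e"

lemma caseB_D:
  assumes d: "y - ee (m - 1) \<in> Y"
  shows "(Sop y ^^ (m - 1 + t)) e - ee (m - 1) \<in> D"
proof (induction t)
  case 0
  then show ?case using Soppow_e[of "m - 1" y] closed_D by (simp add: closed_sub_def)
next
  case (Suc t)
  define u where "u = (Sop y ^^ (m - 1 + t)) e - ee (m - 1)"
  have u: "u \<in> D" using Suc by (simp add: u_def)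
  have dD: "y - ee (m - 1) \<in> D" using d by (simp add: Y_def)
  have "(Sop y ^^ (m - 1 + Suc t)) e = Sop y (ee (m - 1) + u)" by (simp add: u_def)
  also have "\<dots> = y + Sop y u" using Sop_last[of y] by (simp add: lin_add[OF lin_Sop])
  finally have "(Sop y ^^ (m - 1 + Suc t)) e - ee (m - 1) = (y - ee (m - 1)) + Sop y u"
    by (simp add: algebra_simps)
  moreover have "(y - ee (m - 1)) + Sop y u \<in> D" by (rule closed_sub_add[OF closed_D dD Sop_D[OF u]])
  ultimately show ?case by (simp add: diff_add_eq)
qed

lemma z_notD: "y - ee (m - 1) \<in> Y \<Longrightarrow> z y \<notin> D"
proof
  assume d: "y - ee (m - 1) \<in> Y" and zD: "z y \<in> D"
  have "z y - ee (m - 1) \<in> D" using caseB_D[OF d, of N] m_ge2 by (simp add: z_def add.commute)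
  hence "z y - (z y - ee (m - 1)) \<in> D" using closed_sub_diff[OF closed_D zD] by blast
  thus False using ee_notD by simp
qed

lemma z_fix: "y - ee (m - 1) \<in> Y \<Longrightarrow> (Sop y ^^ j) (z y) = z y"
proof (induction j)
  case (Suc j)
  have "Sop y (z y) = (Sop y ^^ Suc (N + m - 1)) e" by (simp add: z_def)
  also have "\<dots> = z y" unfolding z_def by (rule caseB_const[OF Suc.prems]) simp
  finally show ?case using Suc by simp
qed simp

lemma z_V: "y \<in> V \<Longrightarrow> z y \<in> V" using Soppow_V e_V by (simp add: z_def)

lemma img_B:
  assumes y: "y \<in> V" and d: "y - ee (m - 1) \<in> Y" and j: "j \<ge> N + m"
  shows "(Sop y ^^ j) ` V = fs.span (insert (z y) X)"
proof
  have cW: "closed_sub (fs.span (insert (z y) X))" by (rule subspace_closed[OF fs.subspace_span])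
  show "(Sop y ^^ j) ` V \<subseteq> fs.span (insert (z y) X)"
  proof
    fix u assume "u \<in> (Sop y ^^ j) ` V"
    then obtain v where v: "v \<in> V" "u = (Sop y ^^ j) v" by blast
    have "(Sop y ^^ j) v \<in> fs.span (insert (z y) X)"
    proof (rule lin_ext_in[OF lin_Soppow cW _ _ v(1)])
      fix d assume d: "d \<in> D"
      have "(Sop y ^^ j) d = (T' ^^ N) d" using Soppow_D[OF d, where y=y and k=j] D_stable'[OF d, of j] j by simp
      hence "(Sop y ^^ j) d \<in> X" using d by (simp add: X_def)
      thus "(Sop y ^^ j) d \<in> fs.span (insert (z y) X)" by (meson fs.span_base insertCI)
    next
      fix i assume i: "i < m"
      have "(Sop y ^^ j) (ee i) = z y"
        unfolding Soppow_ee[OF i] z_def using j by (intro caseB_const[OF d]) simp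
      thus "(Sop y ^^ j) (ee i) \<in> fs.span (insert (z y) X)" by (simp add: fs.span_base)
    qed
    thus "u \<in> fs.span (insert (z y) X)" using v by simp
  qed
next
  show "fs.span (insert (z y) X) \<subseteq> (Sop y ^^ j) ` V"
  proof
    fix v assume "v \<in> fs.span (insert (z y) X)"
    then obtain k where "v - fscale k (z y) \<in> fs.span X" using fs.span_insert by blast
    hence x: "v - fscale k (z y) \<in> X" using span_X by simp
    define x where "x = v - fscale k (z y)"
    have vx: "v = x + fscale k (z y)" by (simp add: x_def)
    have xV: "x \<in> V" using x X_V by (auto simp: x_def)
    have vV: "v \<in> V" unfolding vx using closed_sub_Vsp xV z_V[OF y]
      by (intro closed_sub_add closed_sub_scale) auto
    have "(Sop y ^^ j) x = x" using Soppow_D[where d=x and y=y and k=j] X_D x X_fixpow by (auto simp: x_def)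
    hence "(Sop y ^^ j) v = v" unfolding vx
      by (simp add: lin_add[OF lin_Soppow] lin_scale[OF lin_Soppow] z_fix[OF d])
    thus "v \<in> (Sop y ^^ j) ` V" using vV by (metis image_eqI)
  qed
qed

lemma srk_B:
  assumes y: "y \<in> V" and d: "y - ee (m - 1) \<in> Y"
  shows "(THE d. \<exists>J. \<forall>j\<ge>J. vdim ((Sop y ^^ j) ` V) = d) = s + 1"
proof (rule the_srk[of "N + m"], intro allI impI)
  fix j assume j: "N + m \<le> j"
  have "z y \<notin> fs.span X" unfolding span_X using z_notD[OF d] X_D by blast
  hence "fs.dim (insert (z y) X) = fs.dim X + 1" by (rule dim_insert_finite[OF finite_X])
  thus "vdim ((Sop y ^^ j) ` V) = s + 1"
    using img_B[OF y d j] by (simp add: vdim_def s_def fs.dim_span)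
qed

lemma img_shift:
  assumes y: "y \<in> V" and v0: "v0 \<in> H"
  shows "Sop (y + T' v0) ` V = Sop y ` V"
proof -
  define u where "u = T' v0"
  have Sy: "Sop (y + u) v = Sop y v + fscale (v (n - 1) * inverse c) u" for v
    by (simp add: Sop_def w_def fun_eq_iff pw algebra_simps)
  have u1: "u = Sop y v0" and u2: "u = Sop (y + u) v0" using Sop_H[OF v0] by (simp_all add: u_def)
  have v0V: "v0 \<in> V" using v0 H_sub_V by blast
  show ?thesis unfolding u_def[symmetric]
  proof
    show "Sop (y + u) ` V \<subseteq> Sop y ` V"
    proof
      fix a assume "a \<in> Sop (y + u) ` V"
      then obtain v where v: "v \<in> V" "a = Sop (y + u) v" by blast
      define t where "t = v (n - 1) * inverse c"
      have "a = Sop y (v + fscale t v0)"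
        using v Sy u1 by (simp add: lin_add[OF lin_Sop] lin_scale[OF lin_Sop] t_def)
      moreover have "v + fscale t v0 \<in> V" using closed_sub_Vsp v v0V
        by (intro closed_sub_add closed_sub_scale) auto
      ultimately show "a \<in> Sop y ` V" by blast
    qed
    show "Sop y ` V \<subseteq> Sop (y + u) ` V"
    proof
      fix a assume "a \<in> Sop y ` V"
      then obtain v where v: "v \<in> V" "a = Sop y v" by blast
      define t where "t = v (n - 1) * inverse c"
      have "Sop (y + u) (v - fscale t v0) = Sop (y + u) v - fscale t u"
        using u2 by (simp add: lin_diff[OF lin_Sop] lin_scale[OF lin_Sop])
      also have "\<dots> = a" using Sy v by (simp add: t_def)
      finally have "a = Sop (y + u) (v - fscale t v0)" by simp
      moreover have "v - fscale t v0 \<in> V" using closed_sub_Vsp v v0V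
        by (intro closed_sub_diff closed_sub_scale) auto
      ultimately show "a \<in> Sop (y + u) ` V" by blast
    qed
  qed
qed

lemma img_x: "d \<in> V \<Longrightarrow> x \<in> X \<Longrightarrow> Sop (d + x) ` V = Sop d ` V"
  using img_shift[of d x] X_H X_fix by auto

lemma img_e: "d \<in> V \<Longrightarrow> Sop (d + ee (m - 1)) ` V = Sop d ` V"
proof -
  assume d: "d \<in> V"
  have "ee (m - 2) \<in> H" using ee_H m_ge2 by simp
  moreover have "T' (ee (m - 2)) = ee (m - 1)" using T'_ee[of "m - 2"] m_ge2
    by (simp add: Suc_diff_Suc numeral_2_eq_2)
  ultimately show ?thesis using img_shift[OF d, of "ee (m - 2)"] by simp
qed

end

lemma times_ite: "(a::'b::semiring_1) * (if P then 1 else 0) = (if P then a else 0)" by simp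

definition unitv :: "nat \<Rightarrow> nat \<Rightarrow> 'a::field" where
  "unitv j = (\<lambda>k. if k = j then 1 else 0)"

lemma matop_fst: "pdom (matop n A) = Vsp n" by (simp add: matop_def pdom_def)
lemma matop_fst': "fst (matop n A) = Vsp n" by (simp add: matop_def)

lemma lin_matop: "lin (papp (matop n A))"
  by (simp add: lin_def matop_def papp_def fun_eq_iff pw sum.distrib sum_distrib_left algebra_simps)

lemma matop_V: "papp (matop n A) v \<in> Vsp n"
  by (simp add: matop_def papp_def Vsp_def)

lemma matop_unit: "A \<in> mats n \<Longrightarrow> j < n \<Longrightarrow> papp (matop n A) (unitv j) i = A i j"
  by (auto simp: matop_def papp_def unitv_def mats_def times_ite)

lemma matop_eq: "matop n A = (Vsp n, papp (matop n A))"
  by (simp add: matop_def papp_def)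

lemma ppow_matop: "ppow (Vsp n) (matop n A) k = (Vsp n, papp (matop n A) ^^ k)"
proof (induction k)
  case 0 then show ?case by (simp add: id_def)
next
  case (Suc k)
  have "\<And>x. x \<in> Vsp n \<Longrightarrow> (papp (matop n A) ^^ k) x \<in> Vsp n"
    by (case_tac k) (auto simp: matop_V)
  thus ?case using Suc by (auto simp: pcomp_def pdom_def papp_def[of "(_, _)"] matop_eq[symmetric] matop_fst matop_fst')
qed

context psetup
begin

lemma T_zero: "T 0 = 0"
proof -
  have h: "0 \<in> H" by (rule closed_sub_0[OF closed_sub_Vsp])
  show ?thesis using T_scale[OF h, of 0] by simp
qed

lemma T_sum: "finite A \<Longrightarrow> (\<And>j. j \<in> A \<Longrightarrow> g j \<in> H) \<Longrightarrow> T (\<Sum>j\<in>A. g j) = (\<Sum>j\<in>A. T (g j))"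
proof (induction A rule: finite_induct)
  case empty then show ?case by (simp add: T_zero)
next
  case (insert x F)
  have "(\<Sum>j\<in>F. g j) \<in> H" using insert closed_sub_Vsp by (intro closed_sub_sum) auto
  thus ?case using insert by (simp add: T_add)
qed

lemma unitv_H: "j < n - 1 \<Longrightarrow> unitv j \<in> H" by (auto simp: unitv_def Vsp_def)

lemma trunc_sum: "trunc v = (\<Sum>j<n - 1. fscale (v j) (unitv j))"
  by (auto simp: trunc_def fun_eq_iff sum_apply_fun pw unitv_def times_ite)

lemma T'_sum: "T' v = (\<Sum>j<n - 1. fscale (v j) (T (unitv j)))"
proof -
  have "T (\<Sum>j<n - 1. fscale (v j) (unitv j)) = (\<Sum>j<n - 1. T (fscale (v j) (unitv j)))"
  proof (rule T_sum)
    fix j assume "j \<in> {..<n - 1}"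
    hence "unitv j \<in> H" by (intro unitv_H) simp
    thus "fscale (v j) (unitv j) \<in> H" by (rule closed_sub_scale[OF closed_sub_Vsp])
  qed simp
  also have "\<dots> = (\<Sum>j<n - 1. fscale (v j) (T (unitv j)))"
  proof (rule sum.cong)
    fix j assume "j \<in> {..<n - 1}"
    hence "unitv j \<in> H" by (intro unitv_H) simp
    thus "T (fscale (v j) (unitv j)) = fscale (v j) (T (unitv j))" by (rule T_scale)
  qed simp
  finally show ?thesis unfolding T'_def trunc_sum .
qed

definition Amat :: "(nat \<Rightarrow> 'a) \<Rightarrow> nat \<Rightarrow> nat \<Rightarrow> 'a" where
  "Amat y = (\<lambda>i j. if i < n \<and> j < n then (if j < n - 1 then T (unitv j) i else w y i) else 0)"

lemma Amat_mats: "Amat y \<in> mats n" by (simp add: Amat_def mats_def)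

lemma papp_Amat: "y \<in> V \<Longrightarrow> papp (matop n (Amat y)) = Sop y"
proof (rule ext)+
  fix v i assume y: "y \<in> V"
  show "papp (matop n (Amat y)) v i = Sop y v i"
  proof (cases "i < n")
    case True
    have nn: "{..<n} = insert (n - 1) {..<n - 1}" using n1 by auto
    have "papp (matop n (Amat y)) v i = (\<Sum>j<n. Amat y i j * v j)" using True by (simp add: matop_def papp_def)
    also have "\<dots> = Amat y i (n - 1) * v (n - 1) + (\<Sum>j<n - 1. Amat y i j * v j)"
      unfolding nn by simp
    also have "Amat y i (n - 1) = w y i" using True n1 by (simp add: Amat_def)
    also have "(\<Sum>j<n - 1. Amat y i j * v j) = (\<Sum>j<n - 1. T (unitv j) i * v j)"
      by (rule sum.cong) (auto simp: Amat_def True)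
    also have "w y i * v (n - 1) + (\<Sum>j<n - 1. T (unitv j) i * v j) = Sop y v i"
      by (simp add: Sop_def T'_sum pw sum_apply_fun algebra_simps)
    finally show ?thesis .
  next
    case False
    have "Sop y v \<in> V" using Sop_V[OF y] .
    thus ?thesis using False by (simp add: matop_def papp_def Vsp_def)
  qed
qed

lemma Amat_surj:
  assumes A: "A \<in> mats n" and ag: "\<forall>x\<in>H. papp (matop n A) x = T x"
  shows "A = Amat (papp (matop n A) (ee (m - 1)))"
proof (rule ext)+
  fix i j
  define SA where "SA = papp (matop n A)"
  define y where "y = SA (ee (m - 1))"
  have lSA: "lin SA" by (simp add: SA_def lin_matop)
  have dec: "ee (m - 1) = trunc (ee (m - 1)) + fscale c bvec" using V_decomp[OF ee_V] by (simp add: c_def)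
  have "SA (ee (m - 1)) = SA (trunc (ee (m - 1)) + fscale c bvec)" using dec by (rule arg_cong)
  also have "\<dots> = SA (trunc (ee (m - 1))) + fscale c (SA bvec)"
    by (simp add: lin_add[OF lSA] lin_scale[OF lSA])
  also have "SA (trunc (ee (m - 1))) = T' (ee (m - 1))" using ag trunc_H by (simp add: SA_def T'_def)
  finally have "y = T' (ee (m - 1)) + fscale c (SA bvec)" by (simp add: y_def)
  hence wy: "w y = SA bvec" using c_nz by (simp add: w_def fun_eq_iff pw field_simps)
  show "A i j = Amat (papp (matop n A) (ee (m - 1))) i j"
  proof (cases "i < n \<and> j < n")
    case True
    have Aij: "A i j = SA (unitv j) i" using matop_unit[OF A] True by (simp add: SA_def)
    show ?thesis
    proof (cases "j < n - 1")
      case True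
      thus ?thesis using Aij ag unitv_H \<open>i < n \<and> j < n\<close> by (simp add: Amat_def SA_def)
    next
      case False
      hence "j = n - 1" using True by linarith
      hence "unitv j = bvec" by (simp add: unitv_def bvec_def)
      moreover have "w (SA (ee (m - Suc 0))) = SA bvec" using wy by (simp add: y_def)
      ultimately show ?thesis using Aij True False by (simp add: Amat_def SA_def[symmetric])
    qed
  next
    case False
    thus ?thesis using A by (auto simp: Amat_def mats_def)
  qed
qed

end

lemma mu_Suc: "mu q (Suc s) = - (q ^ s * mu q s)"
proof -
  have "Suc s choose 2 = s + (s choose 2)"
    by (simp add: numeral_2_eq_2)
  thus ?thesis by (simp add: mu_def power_add)
qed

context psetup
begin

lemma pim_pair: "pim (A, g) = g ` A" by (simp add: pim_def pdom_def papp_def)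

lemma si_iff: "semi_idempotent V (matop n A) \<longleftrightarrow> si (papp (matop n A))"
proof -
  define SA where "SA = papp (matop n A)"
  have pV: "v \<in> V \<Longrightarrow> (SA ^^ k) v \<in> V" for v k by (cases k) (auto simp: SA_def matop_V)
  have "semi_idempotent V (matop n A) \<longleftrightarrow> (\<exists>N. \<forall>v\<in>V. (SA ^^ N) v \<in> V \<and> SA ((SA ^^ N) v) = (SA ^^ N) v)"
    unfolding semi_idempotent_def ppow_matop pim_pair SA_def by (simp add: matop_fst)
  also have "\<dots> \<longleftrightarrow> si SA" unfolding si_def using pV by auto
  finally show ?thesis by (simp add: SA_def)
qed

lemma prank_eq: "prank (matop n A) = vdim (papp (matop n A) ` V)"
  by (simp add: prank_def pim_def matop_fst)

lemma srk_eq: "srk V (matop n A) = (THE d. \<exists>J. \<forall>j\<ge>J. vdim ((papp (matop n A) ^^ j) ` V) = d)"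
  by (simp add: srk_def ppow_matop pim_pair)

lemma good_iff: "good y \<longleftrightarrow> y \<in> D \<or> y \<in> (\<lambda>d. d + ee (m - 1)) ` Y"
proof -
  have "y - ee (m - 1) \<in> Y \<longleftrightarrow> y \<in> (\<lambda>d. d + ee (m - 1)) ` Y"
  proof
    assume "y - ee (m - 1) \<in> Y" thus "y \<in> (\<lambda>d. d + ee (m - 1)) ` Y"
      by (intro image_eqI[of _ _ "y - ee (m - 1)"]) auto
  qed auto
  thus ?thesis by (simp add: good_def)
qed

lemma Y_D: "Y \<subseteq> D" by (auto simp: Y_def)
lemma finite_D: "finite D" by (rule finite_subset[OF D_V finite_Vsp])
lemma finite_Y: "finite Y" by (rule finite_subset[OF Y_D finite_D])

lemma main:
  "(\<Sum>A \<in> {A \<in> mats n. semi_idempotent V (matop n A)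
                 \<and> prank (matop n A) \<le> r
                 \<and> (\<forall>x \<in> H. papp (matop n A) x = T x)}.
            mu (int CARD('a)) (srk V (matop n A)) * f (prank (matop n A))) = 0"
  (is "sum ?G ?Aset = 0")
proof -
  define q where "q = int CARD('a)"
  define RK where "RK y = vdim (Sop y ` V)" for y
  define SR where "SR y = (THE d. \<exists>J. \<forall>j\<ge>J. vdim ((Sop y ^^ j) ` V) = d)" for y
  define Phi where "Phi y = (if RK y \<le> r then f (RK y) else 0)" for y
  define E where "E = (\<lambda>d. d + ee (m - 1)) ` Y"
  define Yset where "Yset = {y \<in> V. good y \<and> RK y \<le> r}"
  have EV: "E \<subseteq> V"
    unfolding E_def using Y_D D_V ee_V closed_sub_Vsp closed_sub_add by blast
  have inj: "inj_on Amat V"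
  proof (rule inj_onI)
    fix y y' assume y: "y \<in> V" and y': "y' \<in> V" and e: "Amat y = Amat y'"
    have "Sop y = Sop y'" using papp_Amat[OF y] papp_Amat[OF y'] e by simp
    thus "y = y'" using Sop_last[of y] Sop_last[of y'] by simp
  qed
  have img: "Amat ` Yset = ?Aset"
  proof
    show "Amat ` Yset \<subseteq> ?Aset"
    proof
      fix A assume "A \<in> Amat ` Yset"
      then obtain y where y: "y \<in> Yset" "A = Amat y" by blast
      have yV: "y \<in> V" and g: "good y" and rk: "RK y \<le> r" using y by (auto simp: Yset_def)
      have pA: "papp (matop n A) = Sop y" using papp_Amat[OF yV] y by simp
      have ag: "\<forall>x\<in>H. Sop y x = T x" using Sop_H T'_H by simp
      show "A \<in> ?Aset"
        using Amat_mats[of y] si_iff[of A] good_si[OF yV g] prank_eq[of A] rk ag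
        unfolding y(2) papp_Amat[OF yV] by (simp add: RK_def papp_Amat[OF yV])
    qed
  next
    show "?Aset \<subseteq> Amat ` Yset"
    proof
      fix A assume A: "A \<in> ?Aset"
      define y where "y = papp (matop n A) (ee (m - 1))"
      have yV: "y \<in> V" by (simp add: y_def matop_V)
      have Aeq: "A = Amat y" using Amat_surj[of A] A by (simp add: y_def)
      have pA: "papp (matop n A) = Sop y" using papp_Amat[OF yV] Aeq by simp
      have "good y" using si_good[OF yV] A si_iff[of A] pA by simp
      moreover have "RK y \<le> r" using A prank_eq[of A] pA by (simp add: RK_def)
      ultimately have "y \<in> Yset" using yV by (simp add: Yset_def)
      thus "A \<in> Amat ` Yset" using Aeq by blast
    qed
  qed
  have bij: "bij_betw Amat Yset ?Aset"
    by (rule bij_betw_imageI[OF inj_on_subset[OF inj] img]) (auto simp: Yset_def)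
  have "sum ?G ?Aset = (\<Sum>y\<in>Yset. ?G (Amat y))"
    by (rule sum.reindex_bij_betw[OF bij, symmetric])
  also have "\<dots> = (\<Sum>y\<in>Yset. mu q (SR y) * f (RK y))"
    by (rule sum.cong) (auto simp: Yset_def srk_eq prank_eq papp_Amat SR_def RK_def q_def)
  also have "Yset = {y \<in> D \<union> E. RK y \<le> r}"
    using D_V EV by (auto simp: Yset_def good_iff E_def)
  also have "(\<Sum>y\<in>{y \<in> D \<union> E. RK y \<le> r}. mu q (SR y) * f (RK y))
      = (\<Sum>y\<in>D \<union> E. mu q (SR y) * Phi y)"
  proof -
    have fin: "finite (D \<union> E)" using finite_D finite_Y by (simp add: E_def)
    have "(\<Sum>y\<in>{y \<in> D \<union> E. RK y \<le> r}. mu q (SR y) * f (RK y))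
        = (\<Sum>y\<in>D \<union> E. if RK y \<le> r then mu q (SR y) * f (RK y) else 0)"
      by (rule sum.inter_filter[OF fin])
    also have "\<dots> = (\<Sum>y\<in>D \<union> E. mu q (SR y) * Phi y)"
      by (rule sum.cong) (simp_all add: Phi_def)
    finally show ?thesis .
  qed
  also have "\<dots> = (\<Sum>y\<in>D. mu q (SR y) * Phi y) + (\<Sum>y\<in>E. mu q (SR y) * Phi y)"
  proof (rule sum.union_disjoint)
    show "finite D" "finite E" using finite_D finite_Y by (simp_all add: E_def)
    show "D \<inter> E = {}"
    proof (rule ccontr)
      assume "D \<inter> E \<noteq> {}"
      then obtain d where d: "d \<in> Y" "d + ee (m - 1) \<in> D" by (auto simp: E_def)
      hence "d + ee (m - 1) - d \<in> D" using Y_D closed_sub_diff[OF closed_D] by blast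
      thus False using ee_notD by simp
    qed
  qed
  also have "(\<Sum>y\<in>D. mu q (SR y) * Phi y) = mu q s * (\<Sum>y\<in>D. Phi y)"
    by (simp add: sum_distrib_left SR_def srk_A)
  also have "(\<Sum>y\<in>E. mu q (SR y) * Phi y) = (\<Sum>d\<in>Y. mu q (SR (d + ee (m - 1))) * Phi (d + ee (m - 1)))"
    unfolding E_def using sum.reindex[of "\<lambda>d. d + ee (m - 1)" Y "\<lambda>y. mu q (SR y) * Phi y"]
    by (simp add: inj_on_def)
  also have "\<dots> = mu q (s + 1) * (\<Sum>d\<in>Y. Phi d)"
    unfolding sum_distrib_left
  proof (rule sum.cong)
    fix d assume d: "d \<in> Y"
    have dV: "d \<in> V" using d Y_D D_V by blast
    have yV: "d + ee (m - 1) \<in> V" using dV ee_V closed_sub_Vsp closed_sub_add by blast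
    have "SR (d + ee (m - 1)) = s + 1" unfolding SR_def using srk_B[OF yV] d by simp
    moreover have "RK (d + ee (m - 1)) = RK d" using img_e[OF dV] by (simp add: RK_def)
    ultimately show "mu q (SR (d + ee (m - 1))) * Phi (d + ee (m - 1)) = mu q (s + 1) * Phi d"
      by (simp add: Phi_def)
  qed simp
  also have "(\<Sum>y\<in>D. Phi y) = (\<Sum>p\<in>X \<times> Y. Phi (fst p + snd p))"
    using sum.reindex_bij_betw[OF XY_bij, of Phi] by (simp add: case_prod_beta)
  also have "\<dots> = (\<Sum>p\<in>X \<times> Y. Phi (snd p))"
  proof (rule sum.cong)
    fix p assume p: "p \<in> X \<times> Y"
    have dV: "snd p \<in> V" using p Y_D D_V by auto
    have xX: "fst p \<in> X" using p by auto
    have "Sop (fst p + snd p) ` V = Sop (snd p) ` V"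
      using img_x[OF dV xX] by (simp add: add.commute)
    hence "RK (fst p + snd p) = RK (snd p)" by (simp add: RK_def)
    thus "Phi (fst p + snd p) = Phi (snd p)" by (simp add: Phi_def)
  qed simp
  also have "\<dots> = of_nat (card X) * (\<Sum>d\<in>Y. Phi d)"
  proof -
    have "(\<Sum>p\<in>X \<times> Y. Phi (snd p)) = (\<Sum>x\<in>X. \<Sum>d\<in>Y. Phi d)"
      using sum.cartesian_product[where g="\<lambda>x d. Phi d" and A=X and B=Y] by (simp add: case_prod_beta)
    thus ?thesis by simp
  qed
  also have "of_nat (card X) = q ^ s"
    using card_subspace[OF subspace_X finite_X] by (simp add: q_def s_def)
  finally show ?thesis by (simp add: mu_Suc algebra_simps)
qed

end

theorem proposition3p4:
  fixes T :: "(nat \<Rightarrow> 'a::{finite,field}) \<Rightarrow> (nat \<Rightarrow> 'a)"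
    and n r :: nat and f :: "nat \<Rightarrow> int"
  assumes "n \<ge> 1"
    and "linear_on (Vsp (n - 1)) T"
    and "\<forall>x \<in> Vsp (n - 1). T x \<in> Vsp n"
    and "semi_idempotent (Vsp n) (Vsp (n - 1), T)"
    and "\<not> (T ` Vsp (n - 1) \<subseteq> Vsp (n - 1))"
  shows "(\<Sum>A \<in> {A \<in> mats n. semi_idempotent (Vsp n) (matop n A)
                 \<and> prank (matop n A) \<le> r
                 \<and> (\<forall>x \<in> Vsp (n - 1). papp (matop n A) x = T x)}.
            mu (int CARD('a)) (srk (Vsp n) (matop n A)) * f (prank (matop n A))) = 0"
proof -
  interpret psetup T n using assms by unfold_locales
  show ?thesis by (rule main)
qed


end
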